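(* Let $f\colon\mathbb{N}\to\mathbb{N}$ be a growth function and let $K,d$ be positive integers. Then there exist $\varepsilon>0$ and $K'\in\mathbb{N}$ such that the following holds. For any collection $\mathcal{F}_1,\dots,\mathcal{F}_n$ of degree-$d$ factors (over a common $\mathbb{F}_2^m$) with $|\mathcal{F}_i|\le K$ for all $i$, there is a sub-collection $\mathcal{F}_{\pi(1)},\dots,\mathcal{F}_{\pi(w)}$ (distinct indices $\pi(1),\dots,\pi(w)$) of size $w\ge n^{\varepsilon}$ and degree-$d$ factors $\mathcal{G}_1,\dots,\mathcal{G}_w$ such that: (1) for every $i$, $\mathcal{G}_i$ is a refinement of $\mathcal{F}_{\pi(i)}$; (2) for every $i$, $|\mathcal{G}_i|\le K'$; (3) for every $i,j$, the factor $\mathcal{G}_i\cup\mathcal{G}_j$ is $f$-regular; (4) the factors $\mathcal{G}_1,\dots,\mathcal{G}_w$ (viewed as sets of polynomials) form a sunflower.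
   Context: A growth function is a non-decreasing $f\colon\mathbb{N}\to\mathbb{N}$ with $f(r)\ge r$ for all $r$. A degree-$d$ factor is a finite set $\mathcal{F}=\{P_1,\dots,P_K\}$ of polynomials $\mathbb{F}_2^m\to\mathbb{F}_2$ of degree at most $d$; $|\mathcal{F}|=K$ is its dimension. For $P$ not identically zero and $\ell\ge1$, $\operatorname{rank}_{\ell}(P)$ is the smallest positive integer $k$ with $P=\Gamma(Q_1,\dots,Q_k)$ for polynomials $Q_j$ of degree at most $\ell$ and some $\Gamma\colon\mathbb{F}_2^k\to\mathbb{F}_2$. A factor is $r$-regular if for every nonzero $(\lambda_1,\dots,\lambda_K)\in\mathbb{F}_2^K$, $\operatorname{rank}_{\ell-1}(\sum_i\lambda_iP_i)>r$ where $\ell=\max_i\deg(\lambda_iP_i)$; it is $f$-regular if it is $f(K)$-regular; the empty factor is regarded as regular for every parameter. $\mathcal{G}=\{Q_1,\dots,Q_{K'}\}$ refines $\mathcal{F}=\{P_1,\dots,P_K\}$ if there is $\Gamma\colon\mathbb{F}_2^{K'}\to\mathbb{F}_2^K$ with $(P_1,\dots,P_K)=\Gamma(Q_1,\dots,Q_{K'})$ as functions. A collection of (possibly repeated, possibly empty) sets $V_1,\dots,V_w$ is a sunflower if, with $C=\bigcap_iV_i$, one has $V_i\cap V_j=C$ for all $i\ne j$. *)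

theory Defs
  imports Complex_Main "HOL-Library.Extended_Nat"
begin

text \<open>Polynomials F_2^m -> F_2 are represented by their unique multilinear
  (reduced) representation: a finite set of monomials, each monomial being a
  finite set of variable indices. A point of F_2^m is the set of coordinates
  equal to 1, i.e. a subset of {..<m}.\<close>

type_synonym poly2 = "nat set set"

definition wf_poly :: "nat \<Rightarrow> poly2 \<Rightarrow> bool" where
  "wf_poly m P \<longleftrightarrow> finite P \<and> (\<forall>S\<in>P. S \<subseteq> {..<m})"

definition peval :: "poly2 \<Rightarrow> nat set \<Rightarrow> bool" where
  "peval P x \<longleftrightarrow> odd (card {S\<in>P. S \<subseteq> x})"

definition pdeg :: "poly2 \<Rightarrow> nat" where
  "pdeg P = Max (insert 0 (card ` P))"

definition psum :: "poly2 set \<Rightarrow> poly2" where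
  "psum T = {S. odd (card {P\<in>T. S \<in> P})}"

definition is_factor :: "nat \<Rightarrow> nat \<Rightarrow> poly2 set \<Rightarrow> bool" where
  "is_factor m d F \<longleftrightarrow> finite F \<and> (\<forall>P\<in>F. wf_poly m P \<and> pdeg P \<le> d)"

definition rank_rep :: "nat \<Rightarrow> nat \<Rightarrow> poly2 \<Rightarrow> nat \<Rightarrow> bool" where
  "rank_rep m l P k \<longleftrightarrow> (\<exists>Qs :: poly2 list. \<exists>\<Gamma> :: bool list \<Rightarrow> bool.
      length Qs = k \<and> (\<forall>Q\<in>set Qs. wf_poly m Q \<and> pdeg Q \<le> l) \<and>
      (\<forall>x. x \<subseteq> {..<m} \<longrightarrow> peval P x = \<Gamma> (map (\<lambda>Q. peval Q x) Qs)))"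

definition prank :: "nat \<Rightarrow> nat \<Rightarrow> poly2 \<Rightarrow> enat" where
  "prank m l P = (if \<exists>k>0. rank_rep m l P k
                  then enat (LEAST k. k > 0 \<and> rank_rep m l P k) else \<infinity>)"

definition r_regular :: "nat \<Rightarrow> nat \<Rightarrow> poly2 set \<Rightarrow> bool" where
  "r_regular m r F \<longleftrightarrow> (\<forall>T. T \<subseteq> F \<and> T \<noteq> {} \<longrightarrow>
      prank m (Max (pdeg ` T) - 1) (psum T) > enat r)"

definition f_regular :: "nat \<Rightarrow> (nat \<Rightarrow> nat) \<Rightarrow> poly2 set \<Rightarrow> bool" where
  "f_regular m f F \<longleftrightarrow> r_regular m (f (card F)) F"

definition growth_function :: "(nat \<Rightarrow> nat) \<Rightarrow> bool" where
  "growth_function f \<longleftrightarrow> mono f \<and> (\<forall>r. r \<le> f r)"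

definition refines :: "nat \<Rightarrow> poly2 set \<Rightarrow> poly2 set \<Rightarrow> bool" where
  "refines m G F \<longleftrightarrow> (\<exists>\<Gamma> :: (poly2 \<Rightarrow> bool) \<Rightarrow> (poly2 \<Rightarrow> bool).
      \<forall>x. x \<subseteq> {..<m} \<longrightarrow>
        (\<forall>P\<in>F. peval P x = \<Gamma> (\<lambda>Q. if Q \<in> G then peval Q x else False) P))"

definition sunflower :: "nat \<Rightarrow> (nat \<Rightarrow> 'a set) \<Rightarrow> bool" where
  "sunflower w V \<longleftrightarrow> (\<forall>i<w. \<forall>j<w. i \<noteq> j \<longrightarrow> V i \<inter> V j = (\<Inter>k\<in>{..<w}. V k))"

end

theory Submission
  imports Defs "HOL-Library.Multiset_Order"
begin

definition agree :: "poly2 set \<Rightarrow> nat set \<Rightarrow> nat set \<Rightarrow> bool" where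
  "agree A x y \<longleftrightarrow> (\<forall>Q\<in>A. peval Q x = peval Q y)"
definition dep :: "nat \<Rightarrow> poly2 set \<Rightarrow> (nat set \<Rightarrow> bool) \<Rightarrow> bool" where
  "dep m A g \<longleftrightarrow> (\<forall>x y. x \<subseteq> {..<m} \<longrightarrow> y \<subseteq> {..<m} \<longrightarrow> agree A x y \<longrightarrow> g x = g y)"
definition okp :: "nat \<Rightarrow> nat \<Rightarrow> poly2 set \<Rightarrow> bool" where
  "okp m l A \<longleftrightarrow> finite A \<and> (\<forall>Q\<in>A. wf_poly m Q \<and> pdeg Q \<le> l)"
definition lowr :: "nat \<Rightarrow> nat \<Rightarrow> (nat set \<Rightarrow> bool) \<Rightarrow> nat \<Rightarrow> bool" where
  "lowr m l g r \<longleftrightarrow> (\<exists>A. okp m l A \<and> card A \<le> r \<and> dep m A g)"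
definition par :: "poly2 set \<Rightarrow> nat set \<Rightarrow> bool" where
  "par T x \<longleftrightarrow> odd (card {P\<in>T. peval P x})"
definition maxdeg :: "poly2 set \<Rightarrow> nat" where "maxdeg T = Max (pdeg ` T)"
definition prof :: "poly2 set \<Rightarrow> nat multiset" where "prof A = image_mset pdeg (mset_set A)"

lemma agree_mono: "A \<subseteq> B \<Longrightarrow> agree B x y \<Longrightarrow> agree A x y"
  unfolding agree_def by blast
lemma agree_mem: "Q \<in> A \<Longrightarrow> agree A x y \<Longrightarrow> peval Q x = peval Q y"
  unfolding agree_def by blast
lemma dep_mem: "Q \<in> B \<Longrightarrow> dep m B (peval Q)"
  unfolding dep_def using agree_mem by blast
lemma dep_mono: "A \<subseteq> B \<Longrightarrow> dep m A g \<Longrightarrow> dep m B g"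
  unfolding dep_def using agree_mono by blast
lemma dep_trans:
  assumes "dep m A g" "\<forall>Q\<in>A. dep m B (peval Q)" shows "dep m B g"
  unfolding dep_def
proof (intro allI impI)
  fix x y assume xy: "x \<subseteq> {..<m}" "y \<subseteq> {..<m}" "agree B x y"
  have "agree A x y" unfolding agree_def
  proof
    fix Q assume "Q \<in> A"
    then have "dep m B (peval Q)" using assms(2) by blast
    then show "peval Q x = peval Q y" using xy unfolding dep_def by blast
  qed
  then show "g x = g y" using assms(1) xy unfolding dep_def by blast
qed
lemma dep_par: "dep m T (par T)"
proof -
  have "agree T x y \<Longrightarrow> {P\<in>T. peval P x} = {P\<in>T. peval P y}" for x y
    using agree_mem by blast
  then show ?thesis unfolding dep_def par_def by metis
qed
lemma dep_xor:
  assumes "dep m A g" "dep m B h" shows "dep m (A \<union> B) (\<lambda>x. g x \<noteq> h x)"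
  unfolding dep_def
proof (intro allI impI)
  fix x y assume xy: "x \<subseteq> {..<m}" "y \<subseteq> {..<m}" "agree (A \<union> B) x y"
  then have "g x = g y" using assms(1) agree_mono[of A "A \<union> B"] unfolding dep_def by blast
  moreover have "h x = h y" using assms(2) xy agree_mono[of B "A \<union> B"] unfolding dep_def by blast
  ultimately show "(g x \<noteq> h x) = (g y \<noteq> h y)" by simp
qed
lemma dep_cong: "dep m A g \<Longrightarrow> (\<And>x. g x = g' x) \<Longrightarrow> dep m A g'"
proof -
  assume "dep m A g" "\<And>x. g x = g' x"
  moreover then have "g = g'" by (intro ext) simp
  ultimately show ?thesis by simp
qed

lemma par_union:
  assumes "finite A" "finite B" "A \<inter> B = {}"
  shows "par (A \<union> B) x = (par A x \<noteq> par B x)"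
proof -
  have e: "{P\<in>A \<union> B. peval P x} = {P\<in>A. peval P x} \<union> {P\<in>B. peval P x}" by auto
  have "card ({P\<in>A. peval P x} \<union> {P\<in>B. peval P x}) = card {P\<in>A. peval P x} + card {P\<in>B. peval P x}"
    using assms by (intro card_Un_disjoint) auto
  then show ?thesis unfolding par_def e by simp
qed

lemma par_insert:
  assumes "finite T" "P \<notin> T"
  shows "par (insert P T) x = (peval P x \<noteq> par T x)"
proof -
  have "par ({P} \<union> T) x = (par {P} x \<noteq> par T x)"
    using assms by (intro par_union) auto
  moreover have "par {P} x = peval P x"
  proof -
    have "{Q\<in>{P}. peval Q x} = (if peval P x then {P} else {})" by auto
    then show ?thesis by (simp add: par_def)
  qed
  ultimately show ?thesis by simp
qed

lemma par_remove:
  assumes "finite T" "P \<in> T"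
  shows "par T x = (peval P x \<noteq> par (T - {P}) x)"
  using par_insert[of "T - {P}" P x] assms by (simp add: insert_absorb)

lemma peval_symdiff:
  assumes "finite A" "finite B"
  shows "peval ((A - B) \<union> (B - A)) x = (peval A x \<noteq> peval B x)"
proof -
  define a where "a = card {S\<in>A - B. S \<subseteq> x}"
  define b where "b = card {S\<in>B - A. S \<subseteq> x}"
  define c where "c = card {S\<in>A \<inter> B. S \<subseteq> x}"
  have 1: "card {S\<in>(A - B) \<union> (B - A). S \<subseteq> x} = a + b"
  proof -
    have "{S\<in>(A - B) \<union> (B - A). S \<subseteq> x} = {S\<in>A - B. S \<subseteq> x} \<union> {S\<in>B - A. S \<subseteq> x}" by auto
    moreover have "card ({S\<in>A - B. S \<subseteq> x} \<union> {S\<in>B - A. S \<subseteq> x}) = a + b"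
      unfolding a_def b_def using assms by (intro card_Un_disjoint) auto
    ultimately show ?thesis by simp
  qed
  have 2: "card {S\<in>A. S \<subseteq> x} = a + c"
  proof -
    have "{S\<in>A. S \<subseteq> x} = {S\<in>A - B. S \<subseteq> x} \<union> {S\<in>A \<inter> B. S \<subseteq> x}" by auto
    moreover have "card ({S\<in>A - B. S \<subseteq> x} \<union> {S\<in>A \<inter> B. S \<subseteq> x}) = a + c"
      unfolding a_def c_def using assms by (intro card_Un_disjoint) auto
    ultimately show ?thesis by simp
  qed
  have 3: "card {S\<in>B. S \<subseteq> x} = b + c"
  proof -
    have "{S\<in>B. S \<subseteq> x} = {S\<in>B - A. S \<subseteq> x} \<union> {S\<in>A \<inter> B. S \<subseteq> x}" by auto
    moreover have "card ({S\<in>B - A. S \<subseteq> x} \<union> {S\<in>A \<inter> B. S \<subseteq> x}) = b + c"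
      unfolding b_def c_def using assms by (intro card_Un_disjoint) auto
    ultimately show ?thesis by simp
  qed
  show ?thesis unfolding peval_def 1 2 3 by auto
qed

lemma psum_sub: "psum T \<subseteq> \<Union>T"
proof
  fix S assume "S \<in> psum T"
  then have "odd (card {P\<in>T. S \<in> P})" by (simp add: psum_def)
  then have "{P\<in>T. S \<in> P} \<noteq> {}" by (metis card.empty even_zero)
  then show "S \<in> \<Union>T" by auto
qed

lemma psum_insert:
  assumes "finite T" "P \<notin> T"
  shows "psum (insert P T) = (P - psum T) \<union> (psum T - P)"
proof -
  have "odd (card {Q\<in>insert P T. S \<in> Q}) = ((S \<in> P) \<noteq> odd (card {Q\<in>T. S \<in> Q}))" for S
  proof (cases "S \<in> P")
    case True
    then have "{Q\<in>insert P T. S \<in> Q} = insert P {Q\<in>T. S \<in> Q}" by auto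
    then show ?thesis using assms True by simp
  next
    case False
    then have "{Q\<in>insert P T. S \<in> Q} = {Q\<in>T. S \<in> Q}" by auto
    then show ?thesis using False by simp
  qed
  then show ?thesis unfolding psum_def by auto
qed

lemma peval_psum:
  assumes "finite T" "\<forall>P\<in>T. finite P"
  shows "peval (psum T) x = par T x"
  using assms
proof (induction T rule: finite_induct)
  case empty
  then show ?case by (simp add: psum_def peval_def par_def)
next
  case (insert P T)
  have "finite (\<Union>T)" using insert by auto
  then have fs: "finite (psum T)" using psum_sub[of T] by (rule finite_subset[rotated])
  have "peval (psum (insert P T)) x = (peval P x \<noteq> peval (psum T) x)"
    unfolding psum_insert[OF insert(1,2)] using peval_symdiff[of P "psum T" x] insert fs by simp
  then show ?case using insert par_insert[OF insert(1,2)] by simp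
qed

lemma const_eval:
  assumes "wf_poly m Q" "pdeg Q = 0"
  shows "peval Q x = peval Q y"
proof -
  have fQ: "finite Q" using assms by (simp add: wf_poly_def)
  have "\<forall>S\<in>Q. S = {}"
  proof
    fix S assume S: "S \<in> Q"
    have "card S \<le> Max (insert 0 (card ` Q))" using fQ S by (intro Max_ge) auto
    then have "card S = 0" using assms by (simp add: pdeg_def)
    moreover have "finite S" using assms S by (auto simp: wf_poly_def intro: finite_subset)
    ultimately show "S = {}" by simp
  qed
  then have "{S\<in>Q. S \<subseteq> x} = {S\<in>Q. S \<subseteq> y}" by auto
  then show ?thesis by (simp add: peval_def)
qed

lemma lowr_mono: "lowr m l g r \<Longrightarrow> r \<le> r' \<Longrightarrow> lowr m l g r'"
  unfolding lowr_def by auto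

lemma prank_lowr:
  assumes "prank m l P \<le> enat r"
  shows "lowr m l (peval P) r"
proof -
  have ex: "\<exists>k>0. rank_rep m l P k" using assms by (auto simp: prank_def split: if_splits)
  define k where "k = (LEAST k. k > 0 \<and> rank_rep m l P k)"
  have k: "k > 0 \<and> rank_rep m l P k" unfolding k_def using ex by (rule LeastI_ex)
  have "prank m l P = enat k" using ex by (simp add: prank_def k_def)
  then have kr: "k \<le> r" using assms by simp
  from k obtain Qs \<Gamma> where Q: "length Qs = k" "\<forall>Q\<in>set Qs. wf_poly m Q \<and> pdeg Q \<le> l"
    "\<forall>x. x \<subseteq> {..<m} \<longrightarrow> peval P x = \<Gamma> (map (\<lambda>Q. peval Q x) Qs)"
    by (auto simp: rank_rep_def)
  have "okp m l (set Qs)" using Q by (simp add: okp_def)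
  moreover have "card (set Qs) \<le> r" using Q(1) kr card_length[of Qs] by linarith
  moreover have "dep m (set Qs) (peval P)"
  proof -
    have "agree (set Qs) x y \<Longrightarrow> map (\<lambda>Q. peval Q x) Qs = map (\<lambda>Q. peval Q y) Qs" for x y
      using agree_mem[of _ "set Qs" x y] by (intro map_cong) auto
    then show ?thesis using Q(3) unfolding dep_def by metis
  qed
  ultimately show ?thesis unfolding lowr_def by blast
qed

lemma fixlemma:
  assumes "lowr m l g r" "l = pdeg P - 1" "pdeg P \<le> d"
    "\<And>x. g x = (peval P x \<noteq> h x)" "dep m B h"
  shows "\<exists>A'. okp m d A' \<and> card A' \<le> r \<and> (\<forall>Q\<in>A'. 0 < pdeg Q \<and> pdeg Q < pdeg P)
     \<and> dep m (B \<union> A') (peval P)"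
proof -
  obtain A where A: "okp m l A" "card A \<le> r" "dep m A g" using assms(1) by (auto simp: lowr_def)
  define A' where "A' = {Q\<in>A. 0 < pdeg Q}"
  have fA: "finite A" using A by (simp add: okp_def)
  have "okp m d A'" using A assms(2,3) by (auto simp: okp_def A'_def)
  moreover have "card A' \<le> r" using A fA card_mono[of A A'] by (auto simp: A'_def)
  moreover have "\<forall>Q\<in>A'. 0 < pdeg Q \<and> pdeg Q < pdeg P" using A assms(2) by (auto simp: okp_def A'_def)
  moreover have "dep m (B \<union> A') (peval P)"
    unfolding dep_def
  proof (intro allI impI)
    fix x y assume xy: "x \<subseteq> {..<m}" "y \<subseteq> {..<m}" "agree (B \<union> A') x y"
    have "agree A x y"
      unfolding agree_def
    proof
      fix Q assume Q: "Q \<in> A"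
      show "peval Q x = peval Q y"
      proof (cases "pdeg Q = 0")
        case True
        then show ?thesis using Q A(1) const_eval[of m Q x y] by (simp add: okp_def)
      next
        case False
        then have "Q \<in> B \<union> A'" using Q by (simp add: A'_def)
        then show ?thesis using xy(3) agree_mem by blast
      qed
    qed
    then have "g x = g y" using A(3) xy unfolding dep_def by blast
    moreover have "h x = h y" using assms(5) xy agree_mono[of B "B \<union> A'"] unfolding dep_def by blast
    ultimately show "peval P x = peval P y" using assms(4)[of x] assms(4)[of y] by auto
  qed
  ultimately show ?thesis by blast
qed

lemma absorb:
  assumes "lowr m l g r" "\<And>x. g x = (g' x \<noteq> h x)" "dep m B h" "okp m l B"
  shows "lowr m l g' (r + card B)"
proof -
  obtain A where A: "okp m l A" "card A \<le> r" "dep m A g" using assms(1) by (auto simp: lowr_def)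
  have "okp m l (A \<union> B)" using A assms by (auto simp: okp_def)
  moreover have "card (A \<union> B) \<le> r + card B" using A(2) card_Un_le[of A B] by simp
  moreover have "dep m (A \<union> B) g'"
    unfolding dep_def
  proof (intro allI impI)
    fix x y assume xy: "x \<subseteq> {..<m}" "y \<subseteq> {..<m}" "agree (A \<union> B) x y"
    then have "g x = g y" using A(3) agree_mono[of A "A \<union> B"] unfolding dep_def by blast
    moreover have "h x = h y" using assms(3) xy agree_mono[of B "A \<union> B"] unfolding dep_def by blast
    ultimately show "g' x = g' y" using assms(2)[of x] assms(2)[of y] by auto
  qed
  ultimately show ?thesis unfolding lowr_def by blast
qed

lemma prof_size: "finite A \<Longrightarrow> size (prof A) = card A"
  by (simp add: prof_def)
lemma prof_set: "finite A \<Longrightarrow> set_mset (prof A) = pdeg ` A"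
  by (simp add: prof_def)
lemma prof_sub: "finite A \<Longrightarrow> B \<subseteq> A \<Longrightarrow> prof B \<le> prof A"
  unfolding prof_def
  by (intro subset_eq_imp_le_multiset image_mset_subseteq_mono) (simp add: msubset_mset_set_iff finite_subset)

lemma prof_decr:
  assumes "finite H" "finite A'" "P \<in> H" "\<forall>Q\<in>A'. pdeg Q < pdeg P" "H' \<subseteq> (H - {P}) \<union> A'"
  shows "prof H' < prof H"
proof -
  define B where "B = H' \<inter> H"
  define D where "D = H' - H"
  have fB: "finite B" "finite D" using assms by (auto simp: B_def D_def intro: finite_subset)
  have "H' = B \<union> D" by (auto simp: B_def D_def)
  moreover have "B \<inter> D = {}" by (auto simp: B_def D_def)
  ultimately have 1: "prof H' = prof B + prof D"
    unfolding prof_def using fB mset_set_Union[of B D] by simp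
  have "H = B \<union> (H - B)" by (auto simp: B_def)
  then have 2: "prof H = prof B + prof (H - B)"
    unfolding prof_def using fB assms(1)
    by (metis Diff_disjoint finite_Diff image_mset_union mset_set_Union)
  have "P \<in> H - B" using assms by (auto simp: B_def)
  moreover have "D \<subseteq> A'" using assms by (auto simp: D_def)
  ultimately have "prof D < prof (H - B)"
    using assms fB unfolding prof_def
    by (intro ex_gt_imp_less_multiset) (auto intro!: exI[of _ "pdeg P"])
  then show ?thesis unfolding 1 2 by simp
qed

lemma finite_msets: "finite {M :: nat multiset. set_mset M \<subseteq> {..d} \<and> size M \<le> b}"
proof -
  have "{M :: nat multiset. set_mset M \<subseteq> {..d} \<and> size M \<le> b} \<subseteq> mset ` {xs. set xs \<subseteq> {..d} \<and> length xs \<le> b}"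
  proof
    fix M :: "nat multiset" assume "M \<in> {M. set_mset M \<subseteq> {..d} \<and> size M \<le> b}"
    moreover obtain xs where "mset xs = M" using ex_mset by blast
    ultimately show "M \<in> mset ` {xs. set xs \<subseteq> {..d} \<and> length xs \<le> b}" by auto
  qed
  moreover have "finite {xs. set xs \<subseteq> {..d} \<and> length xs \<le> (b::nat)}"
    by (rule finite_lists_length_le) simp
  ultimately show ?thesis by (meson finite_imageI finite_subset)
qed

lemma peval_psum_fun:
  assumes "okp m d G" "T \<subseteq> G"
  shows "peval (psum T) = par T"
proof
  fix x
  have "finite T" using assms by (auto simp: okp_def intro: finite_subset)
  moreover have "\<forall>P\<in>T. finite P" using assms by (auto simp: okp_def wf_poly_def)
  ultimately show "peval (psum T) x = par T x" by (rule peval_psum)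
qed

lemma not_regular_fail:
  assumes "\<not> f_regular m f G" "okp m d G"
  shows "\<exists>T. T \<subseteq> G \<and> T \<noteq> {} \<and> lowr m (maxdeg T - 1) (par T) (f (card G))"
proof -
  have "\<not> (\<forall>T. T \<subseteq> G \<and> T \<noteq> {} \<longrightarrow> enat (f (card G)) < prank m (Max (pdeg ` T) - 1) (psum T))"
    using assms(1) unfolding f_regular_def r_regular_def by simp
  then obtain T where T: "T \<subseteq> G" "T \<noteq> {}" "\<not> enat (f (card G)) < prank m (Max (pdeg ` T) - 1) (psum T)"
    by blast
  then have "prank m (Max (pdeg ` T) - 1) (psum T) \<le> enat (f (card G))" by (simp add: not_less)
  then have "lowr m (Max (pdeg ` T) - 1) (peval (psum T)) (f (card G))" by (rule prank_lowr)
  then have "lowr m (maxdeg T - 1) (par T) (f (card G))"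
    using peval_psum_fun[OF assms(2) T(1)] by (simp add: maxdeg_def)
  then show ?thesis using T by blast
qed

lemma regular_from_good:
  assumes "okp m d G" "f (card G) \<le> r"
    "\<And>T. T \<subseteq> G \<Longrightarrow> T \<noteq> {} \<Longrightarrow> \<not> lowr m (maxdeg T - 1) (par T) r"
  shows "f_regular m f G"
proof (rule ccontr)
  assume "\<not> f_regular m f G"
  then obtain T where T: "T \<subseteq> G" "T \<noteq> {}" "lowr m (maxdeg T - 1) (par T) (f (card G))"
    using not_regular_fail[OF _ assms(1)] by blast
  have "lowr m (maxdeg T - 1) (par T) r" using lowr_mono[OF T(3) assms(2)] .
  then show False using assms(3) \<open>T \<subseteq> G\<close> \<open>T \<noteq> {}\<close> by blast
qed

lemma maxdeg_in:
  assumes "finite T" "T \<noteq> {}"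
  shows "\<exists>P\<in>T. pdeg P = maxdeg T"
proof -
  have "Max (pdeg ` T) \<in> pdeg ` T" using assms by (intro Max_in) auto
  then show ?thesis by (auto simp: maxdeg_def)
qed

lemma maxdeg_ge:
  assumes "finite T" "P \<in> T"
  shows "pdeg P \<le> maxdeg T"
  using assms by (auto simp: maxdeg_def)

lemma reg_prof:
  fixes M :: "nat multiset"
  shows "\<exists>R. \<forall>m G. okp m d G \<and> prof G = M \<longrightarrow>
     (\<exists>G'. okp m d G' \<and> card G' \<le> R \<and> f_regular m f G' \<and> (\<forall>Q\<in>G. dep m G' (peval Q)))"
proof (induction M rule: less_induct)
  case (less M)
  define b where "b = size M"
  define S where "S = {M'. M' < M \<and> set_mset M' \<subseteq> {..d} \<and> size M' \<le> b + f b}"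
  have fS: "finite S"
    by (rule finite_subset[OF _ finite_msets[of d "b + f b"]]) (auto simp: S_def)
  have "\<forall>M'\<in>S. \<exists>R. \<forall>m G. okp m d G \<and> prof G = M' \<longrightarrow>
     (\<exists>G'. okp m d G' \<and> card G' \<le> R \<and> f_regular m f G' \<and> (\<forall>Q\<in>G. dep m G' (peval Q)))"
    using less by (auto simp: S_def)
  then obtain Rf where Rf: "\<forall>M'\<in>S. \<forall>m G. okp m d G \<and> prof G = M' \<longrightarrow>
     (\<exists>G'. okp m d G' \<and> card G' \<le> Rf M' \<and> f_regular m f G' \<and> (\<forall>Q\<in>G. dep m G' (peval Q)))"
    by (rule bchoice[THEN exE]) blast
  define R where "R = max b (Max (insert 0 (Rf ` S)))"
  show ?case
  proof (intro exI[of _ R] allI impI)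
    fix m G assume G: "okp m d G \<and> prof G = M"
    have fG: "finite G" using G by (simp add: okp_def)
    have cG: "card G = b" using G prof_size[OF fG] by (simp add: b_def)
    show "\<exists>G'. okp m d G' \<and> card G' \<le> R \<and> f_regular m f G' \<and> (\<forall>Q\<in>G. dep m G' (peval Q))"
    proof (cases "f_regular m f G")
      case True
      then show ?thesis using G cG dep_mem by (intro exI[of _ G]) (auto simp: R_def)
    next
      case False
      obtain T where T: "T \<subseteq> G" "T \<noteq> {}" "lowr m (maxdeg T - 1) (par T) (f b)"
        using not_regular_fail[OF False] G cG by auto
      have fT: "finite T" using T fG finite_subset by blast
      obtain P where P: "P \<in> T" "pdeg P = maxdeg T" using maxdeg_in[OF fT T(2)] by blast
      have "P \<in> G" using P T by blast
      then have Pd: "pdeg P \<le> d" using G by (auto simp: okp_def)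
      obtain A' where A': "okp m d A'" "card A' \<le> f b" "\<forall>Q\<in>A'. 0 < pdeg Q \<and> pdeg Q < pdeg P"
        "dep m ((T - {P}) \<union> A') (peval P)"
        using fixlemma[OF T(3), of P d "par (T - {P})" "T - {P}"] P Pd par_remove[OF fT P(1)] dep_par
        by auto
      define G2 where "G2 = (G - {P}) \<union> A'"
      have fA: "finite A'" using A' by (simp add: okp_def)
      have ok2: "okp m d G2" using G A' by (auto simp: okp_def G2_def)
      have f2: "finite G2" using ok2 by (simp add: okp_def)
      have lt: "prof G2 < M"
        using prof_decr[OF fG fA _ _ , of P G2] P T A'(3) G by (auto simp: G2_def)
      have "card G2 \<le> card (G - {P}) + card A'" unfolding G2_def by (rule card_Un_le)
      then have c2: "card G2 \<le> b + f b" using A'(2) cG card_Diff1_le[of G P] by linarith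
      have "prof G2 \<in> S"
        using lt c2 ok2 prof_size[OF f2] prof_set[OF f2] by (auto simp: S_def okp_def)
      then obtain G' where G': "okp m d G'" "card G' \<le> Rf (prof G2)" "f_regular m f G'"
        "\<forall>Q\<in>G2. dep m G' (peval Q)"
        using Rf ok2 by blast
      have "Rf (prof G2) \<le> Max (insert 0 (Rf ` S))" using \<open>prof G2 \<in> S\<close> fS by (intro Max_ge) auto
      then have "Rf (prof G2) \<le> R" by (simp add: R_def)
      moreover have "\<forall>Q\<in>G. dep m G' (peval Q)"
      proof
        fix Q assume Q: "Q \<in> G"
        have "dep m G2 (peval Q)"
        proof (cases "Q = P")
          case True
          have "(T - {P}) \<union> A' \<subseteq> G2" using T by (auto simp: G2_def)
          then show ?thesis using A'(4) True dep_mono by blast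
        next
          case False
          then show ?thesis using Q by (intro dep_mem) (auto simp: G2_def)
        qed
        then show "dep m G' (peval Q)" using G'(4) dep_trans by blast
      qed
      ultimately show ?thesis using G' by (intro exI[of _ G']) auto
    qed
  qed
qed

lemma REG:
  "\<exists>R. \<forall>m G. okp m d G \<and> card G \<le> B \<longrightarrow>
     (\<exists>G'. okp m d G' \<and> card G' \<le> R \<and> f_regular m f G' \<and> (\<forall>Q\<in>G. dep m G' (peval Q)))"
proof -
  define S where "S = {M :: nat multiset. set_mset M \<subseteq> {..d} \<and> size M \<le> B}"
  have fS: "finite S" unfolding S_def by (rule finite_msets)
  have "\<forall>M\<in>S. \<exists>R. \<forall>m G. okp m d G \<and> prof G = M \<longrightarrow>
     (\<exists>G'. okp m d G' \<and> card G' \<le> R \<and> f_regular m f G' \<and> (\<forall>Q\<in>G. dep m G' (peval Q)))"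
    using reg_prof by blast
  then obtain Rf where Rf: "\<forall>M\<in>S. \<forall>m G. okp m d G \<and> prof G = M \<longrightarrow>
     (\<exists>G'. okp m d G' \<and> card G' \<le> Rf M \<and> f_regular m f G' \<and> (\<forall>Q\<in>G. dep m G' (peval Q)))"
    by (rule bchoice[THEN exE]) blast
  show ?thesis
  proof (intro exI[of _ "Max (Rf ` S)"] allI impI)
    fix m G assume G: "okp m d G \<and> card G \<le> B"
    have fG: "finite G" using G by (simp add: okp_def)
    have "prof G \<in> S" using G prof_size[OF fG] prof_set[OF fG] by (auto simp: S_def okp_def)
    then obtain G' where "okp m d G'" "card G' \<le> Rf (prof G)" "f_regular m f G'" "\<forall>Q\<in>G. dep m G' (peval Q)"
      using Rf G by blast
    moreover have "Rf (prof G) \<le> Max (Rf ` S)" using \<open>prof G \<in> S\<close> fS by auto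
    ultimately show "\<exists>G'. okp m d G' \<and> card G' \<le> Max (Rf ` S) \<and> f_regular m f G' \<and> (\<forall>Q\<in>G. dep m G' (peval Q))"
      by (intro exI[of _ G']) auto
  qed
qed

lemma greedy:
  fixes E :: "'a \<Rightarrow> 'a \<Rightarrow> bool"
  assumes "finite V" "\<And>u v. E u v \<Longrightarrow> E v u" "\<forall>v\<in>V. card {u\<in>V. E v u} < q"
  shows "\<exists>S\<subseteq>V. (\<forall>u\<in>S. \<forall>v\<in>S. u \<noteq> v \<longrightarrow> \<not> E u v) \<and> card V \<le> q * card S"
  using assms(1,3)
proof (induction "card V" arbitrary: V rule: less_induct)
  case less
  show ?case
  proof (cases "V = {}")
    case True
    then show ?thesis by auto
  next
    case False
    then obtain v where v: "v \<in> V" by blast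
    define N where "N = insert v {u\<in>V. E v u}"
    define V' where "V' = V - N"
    have NV: "N \<subseteq> V" using v by (auto simp: N_def)
    have cN: "card N \<le> q"
    proof -
      have "card N \<le> Suc (card {u\<in>V. E v u})" unfolding N_def using less.prems(1) by (simp add: card_insert_if)
      moreover have "card {u\<in>V. E v u} < q" using less.prems(2) v by blast
      ultimately show ?thesis by linarith
    qed
    have fV': "finite V'" using less.prems by (simp add: V'_def)
    have cV': "card V' = card V - card N" unfolding V'_def using NV less.prems(1) by (meson card_Diff_subset finite_subset)
    have "V' \<subset> V" using v by (auto simp: V'_def N_def)
    then have "card V' < card V" using less.prems(1) by (rule psubset_card_mono[rotated])
    have "\<forall>w\<in>V'. card {u\<in>V'. E w u} < q"
    proof
      fix w assume "w \<in> V'"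
      then have "card {u\<in>V'. E w u} \<le> card {u\<in>V. E w u}"
        using less.prems(1) by (intro card_mono) (auto simp: V'_def)
      moreover have "w \<in> V" using \<open>w \<in> V'\<close> by (simp add: V'_def)
      then have "card {u\<in>V. E w u} < q" using less.prems(2) by blast
      ultimately show "card {u\<in>V'. E w u} < q" by linarith
    qed
    note ih = less.hyps[OF \<open>card V' < card V\<close> fV' this]
    obtain S' where S': "S' \<subseteq> V'" "\<forall>u\<in>S'. \<forall>w\<in>S'. u \<noteq> w \<longrightarrow> \<not> E u w" "card V' \<le> q * card S'"
      using ih by blast
    have vS': "v \<notin> S'" using S'(1) by (auto simp: V'_def N_def)
    have fS': "finite S'" using S'(1) fV' finite_subset by blast
    have noE: "\<forall>u\<in>S'. \<not> E v u \<and> \<not> E u v"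
    proof
      fix u assume "u \<in> S'"
      then have u: "u \<in> V" "u \<notin> N" using S'(1) by (auto simp: V'_def)
      then have "\<not> E v u" by (simp add: N_def)
      moreover have "\<not> E u v" using assms(2) \<open>\<not> E v u\<close> by blast
      ultimately show "\<not> E v u \<and> \<not> E u v" by simp
    qed
    have "insert v S' \<subseteq> V" using S'(1) v by (auto simp: V'_def)
    moreover have "\<forall>u\<in>insert v S'. \<forall>w\<in>insert v S'. u \<noteq> w \<longrightarrow> \<not> E u w"
    proof (intro ballI impI)
      fix u w assume "u \<in> insert v S'" "w \<in> insert v S'" "u \<noteq> w"
      then show "\<not> E u w" using S'(2) noE by (cases "u = v"; cases "w = v") auto
    qed
    moreover have "card V \<le> q * card (insert v S')"
    proof -
      have "card (insert v S') = Suc (card S')" using vS' fS' by simp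
      then have "q * card (insert v S') = q * card S' + q" by simp
      moreover have "card V \<le> card V' + card N" using cV' by linarith
      ultimately show ?thesis using S'(3) cN by linarith
    qed
    ultimately show ?thesis by blast
  qed
qed

lemma pigeon:
  assumes "finite N" "finite Y" "\<forall>x\<in>N. g x \<in> Y" "Y \<noteq> {}"
  shows "\<exists>y\<in>Y. card N \<le> card Y * card {x\<in>N. g x = y}"
proof -
  define k where "k = Max ((\<lambda>y. card {x\<in>N. g x = y}) ` Y)"
  have "k \<in> (\<lambda>y. card {x\<in>N. g x = y}) ` Y" unfolding k_def using assms(2,4) by (intro Max_in) auto
  then obtain y where y: "y \<in> Y" "card {x\<in>N. g x = y} = k" by auto
  have "N = (\<Union>y\<in>Y. {x\<in>N. g x = y})" using assms(3) by auto
  then have "card N \<le> (\<Sum>y\<in>Y. card {x\<in>N. g x = y})"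
    using card_UN_le[OF assms(2), of "\<lambda>y. {x\<in>N. g x = y}"] by simp
  also have "\<dots> \<le> card Y * k"
    using sum_bounded_above[of Y "\<lambda>y. card {x\<in>N. g x = y}" k] assms(2) by (auto simp: k_def)
  finally show ?thesis using y by auto
qed

definition corefail :: "nat \<Rightarrow> poly2 set \<Rightarrow> nat \<Rightarrow> bool" where
  "corefail m C r \<longleftrightarrow> (\<exists>T. T \<subseteq> C \<and> T \<noteq> {} \<and> lowr m (maxdeg T - 1) (par T) r)"
definition sfail :: "nat \<Rightarrow> poly2 set \<Rightarrow> poly2 set \<Rightarrow> nat \<Rightarrow> bool" where
  "sfail m C H r \<longleftrightarrow> (\<exists>TC TI. TC \<subseteq> C \<and> TI \<subseteq> H \<and> TI \<noteq> {} \<and>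
      lowr m (maxdeg (TC \<union> TI) - 1) (par (TC \<union> TI)) r)"
definition xfail :: "nat \<Rightarrow> poly2 set \<Rightarrow> poly2 set \<Rightarrow> poly2 set \<Rightarrow> nat \<Rightarrow> bool" where
  "xfail m C H1 H2 r \<longleftrightarrow> (\<exists>TC T1 T2. TC \<subseteq> C \<and> T1 \<subseteq> H1 \<and> T2 \<subseteq> H2 \<and> T1 \<noteq> {} \<and> T2 \<noteq> {} \<and>
      lowr m (maxdeg (TC \<union> T1 \<union> T2) - 1) (\<lambda>x. par TC x \<noteq> (par T1 x \<noteq> par T2 x)) r)"

lemma xfail_sym: "xfail m C H1 H2 r \<Longrightarrow> xfail m C H2 H1 r"
proof -
  assume "xfail m C H1 H2 r"
  then obtain TC T1 T2 where T: "TC \<subseteq> C" "T1 \<subseteq> H1" "T2 \<subseteq> H2" "T1 \<noteq> {}" "T2 \<noteq> {}"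
    "lowr m (maxdeg (TC \<union> T1 \<union> T2) - 1) (\<lambda>x. par TC x \<noteq> (par T1 x \<noteq> par T2 x)) r"
    unfolding xfail_def by blast
  have e1: "TC \<union> T2 \<union> T1 = TC \<union> T1 \<union> T2" by blast
  have e2: "(\<lambda>x. par TC x \<noteq> (par T2 x \<noteq> par T1 x)) = (\<lambda>x. par TC x \<noteq> (par T1 x \<noteq> par T2 x))" by auto
  show ?thesis unfolding xfail_def using T e1 e2 by metis
qed

lemma lowr_false: "(\<And>x. g x = False) \<Longrightarrow> lowr m l g r"
  unfolding lowr_def okp_def dep_def by (intro exI[of _ "{}"]) auto

lemma finite_okp: "okp m d A \<Longrightarrow> B \<subseteq> A \<Longrightarrow> finite B"
  unfolding okp_def using finite_subset by blast

lemma okp_sub: "okp m d A \<Longrightarrow> B \<subseteq> A \<Longrightarrow> okp m d B"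
  unfolding okp_def using finite_subset by blast

lemma okp_Un: "okp m d A \<Longrightarrow> okp m d B \<Longrightarrow> okp m d (A \<union> B)"
  unfolding okp_def by blast

lemma good_single:
  assumes "okp m d C" "okp m d H" "H \<inter> C = {}" "\<not> corefail m C r" "\<not> sfail m C H r"
    "f (card (C \<union> H)) \<le> r"
  shows "f_regular m f (C \<union> H)"
proof (rule regular_from_good[of m d "C \<union> H" f r, OF okp_Un[OF assms(1,2)] assms(6)])
  fix T assume T: "T \<subseteq> C \<union> H" "T \<noteq> {}"
  define TC where "TC = T \<inter> C"
  define TI where "TI = T \<inter> H"
  have eT: "T = TC \<union> TI" using T by (auto simp: TC_def TI_def)
  show "\<not> lowr m (maxdeg T - 1) (par T) r"
  proof (cases "TI = {}")
    case True
    then have "T \<subseteq> C" using eT by (auto simp: TC_def)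
    then show ?thesis using assms(4) T unfolding corefail_def by blast
  next
    case False
    have "TC \<subseteq> C" "TI \<subseteq> H" by (auto simp: TC_def TI_def)
    then show ?thesis using assms(5) False eT unfolding sfail_def by metis
  qed
qed

lemma good_pair:
  assumes "okp m d C" "okp m d H1" "okp m d H2" "H1 \<inter> C = {}" "H2 \<inter> C = {}"
    "\<not> corefail m C r" "\<not> sfail m C H1 r" "\<not> sfail m C H2 r" "\<not> xfail m C H1 H2 r"
    "f (card (C \<union> H1 \<union> H2)) \<le> r"
  shows "f_regular m f (C \<union> H1 \<union> H2)" "H1 \<inter> H2 = {}"
proof -
  show disj: "H1 \<inter> H2 = {}"
  proof (rule ccontr)
    assume "H1 \<inter> H2 \<noteq> {}"
    then obtain p where p: "p \<in> H1" "p \<in> H2" by blast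
    have "lowr m (maxdeg ({} \<union> {p} \<union> {p}) - 1) (\<lambda>x. par {} x \<noteq> (par {p} x \<noteq> par {p} x)) r"
      by (rule lowr_false) (simp add: par_def)
    then have "xfail m C H1 H2 r" unfolding xfail_def using p
      by (intro exI[of _ "{}"] exI[of _ "{p}"]) auto
    then show False using assms(9) by blast
  qed
  have ok: "okp m d (C \<union> H1 \<union> H2)" using assms(1-3) okp_Un by blast
  show "f_regular m f (C \<union> H1 \<union> H2)"
  proof (rule regular_from_good[of m d "C \<union> H1 \<union> H2" f r, OF ok assms(10)])
    fix T assume T: "T \<subseteq> C \<union> H1 \<union> H2" "T \<noteq> {}"
    define TC where "TC = T \<inter> C"
    define T1 where "T1 = T \<inter> H1"
    define T2 where "T2 = T \<inter> H2"
    have eT: "T = TC \<union> T1 \<union> T2" using T by (auto simp: TC_def T1_def T2_def)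
    have sub: "TC \<subseteq> C" "T1 \<subseteq> H1" "T2 \<subseteq> H2" by (auto simp: TC_def T1_def T2_def)
    have fin: "finite TC" "finite T1" "finite T2"
      using finite_okp[OF assms(1) sub(1)] finite_okp[OF assms(2) sub(2)] finite_okp[OF assms(3) sub(3)] by auto
    show "\<not> lowr m (maxdeg T - 1) (par T) r"
    proof (cases "T1 = {}")
      case T1: True
      show ?thesis
      proof (cases "T2 = {}")
        case True
        then have "T \<subseteq> C" using eT T1 by (auto simp: TC_def)
        then show ?thesis using assms(6) T unfolding corefail_def by blast
      next
        case False
        have "T = TC \<union> T2" using eT T1 by simp
        then show ?thesis using assms(8) False sub unfolding sfail_def by metis
      qed
    next
      case T1: False
      show ?thesis
      proof (cases "T2 = {}")
        case True
        have "T = TC \<union> T1" using eT True by simp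
        then show ?thesis using assms(7) T1 sub unfolding sfail_def by metis
      next
        case False
        have d1: "TC \<inter> (T1 \<union> T2) = {}" using sub assms(4,5) by blast
        have d2: "T1 \<inter> T2 = {}" using sub disj by blast
        have "par T = (\<lambda>x. par TC x \<noteq> (par T1 x \<noteq> par T2 x))"
        proof
          fix x
          have "par T x = (par TC x \<noteq> par (T1 \<union> T2) x)"
            unfolding eT Un_assoc using fin d1 by (intro par_union) auto
          also have "par (T1 \<union> T2) x = (par T1 x \<noteq> par T2 x)"
            using fin d2 by (intro par_union) auto
          finally show "par T x = (par TC x \<noteq> (par T1 x \<noteq> par T2 x))" .
        qed
        then show ?thesis using assms(9) False T1 sub eT unfolding xfail_def by metis
      qed
    qed
  qed
qed

lemma core_step:
  assumes ok: "okp m d C" and fail: "corefail m C r2"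
  shows "\<exists>C'. okp m d C' \<and> prof C' < prof C \<and> card C' \<le> card C + r2 \<and>
     (\<forall>Q\<in>C. dep m C' (peval Q))"
proof -
  obtain T where T: "T \<subseteq> C" "T \<noteq> {}" "lowr m (maxdeg T - 1) (par T) r2"
    using fail unfolding corefail_def by blast
  have fT: "finite T" using finite_okp[OF ok T(1)] .
  have fC: "finite C" using ok by (simp add: okp_def)
  obtain P where P: "P \<in> T" "pdeg P = maxdeg T" using maxdeg_in[OF fT T(2)] by blast
  have "P \<in> C" using P T by blast
  then have Pd: "pdeg P \<le> d" using ok by (auto simp: okp_def)
  obtain A' where A': "okp m d A'" "card A' \<le> r2" "\<forall>Q\<in>A'. 0 < pdeg Q \<and> pdeg Q < pdeg P"
    "dep m ((T - {P}) \<union> A') (peval P)"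
    using fixlemma[OF T(3), of P d "par (T - {P})" "T - {P}"] P Pd par_remove[OF fT P(1)] dep_par
    by auto
  define C' where "C' = (C - {P}) \<union> A'"
  have fA: "finite A'" using A' by (simp add: okp_def)
  have "okp m d C'" using ok A' by (auto simp: okp_def C'_def)
  moreover have "prof C' < prof C"
    using prof_decr[OF fC fA \<open>P \<in> C\<close>, of C'] A'(3) by (auto simp: C'_def)
  moreover have "card C' \<le> card C + r2"
  proof -
    have "card C' \<le> card (C - {P}) + card A'" unfolding C'_def by (rule card_Un_le)
    then show ?thesis using A'(2) card_Diff1_le[of C P] by linarith
  qed
  moreover have "\<forall>Q\<in>C. dep m C' (peval Q)"
  proof
    fix Q assume Q: "Q \<in> C"
    show "dep m C' (peval Q)"
    proof (cases "Q = P")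
      case True
      have "(T - {P}) \<union> A' \<subseteq> C'" using T by (auto simp: C'_def)
      then show ?thesis using A'(4) True dep_mono by blast
    next
      case False
      then show ?thesis using Q by (intro dep_mem) (auto simp: C'_def)
    qed
  qed
  ultimately show ?thesis by blast
qed

lemma single_fix:
  assumes okC: "okp m d C" and okH: "okp m d H" and disj: "H \<inter> C = {}" and cH: "card H \<le> hb"
    and nc: "\<not> corefail m C (r1 + hb)" and fail: "sfail m C H r1"
  shows "\<exists>H'. okp m d H' \<and> H' \<inter> C = {} \<and> prof H' < prof H \<and> card H' \<le> card H + r1 \<and>
     (\<forall>Q\<in>C \<union> H. dep m (C \<union> H') (peval Q))"
proof -
  obtain TC TI where T: "TC \<subseteq> C" "TI \<subseteq> H" "TI \<noteq> {}"
    "lowr m (maxdeg (TC \<union> TI) - 1) (par (TC \<union> TI)) r1"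
    using fail unfolding sfail_def by blast
  define T where "T = TC \<union> TI"
  have fTC: "finite TC" using finite_okp[OF okC T(1)] .
  have fTI: "finite TI" using finite_okp[OF okH T(2)] .
  have fT: "finite T" using fTC fTI by (simp add: T_def)
  have fH: "finite H" using okH by (simp add: okp_def)
  have TC_TI: "TC \<inter> TI = {}" using T disj by blast
  have "\<exists>P\<in>TI. pdeg P = maxdeg T"
  proof (rule ccontr)
    assume no: "\<not> (\<exists>P\<in>TI. pdeg P = maxdeg T)"
    have lt: "\<forall>Q\<in>TI. pdeg Q < maxdeg T"
      using no maxdeg_ge[OF fT] by (force simp: T_def)
    obtain P where P: "P \<in> T" "pdeg P = maxdeg T" using maxdeg_in[OF fT] T(3) by (auto simp: T_def)
    have PC: "P \<in> TC" using P no by (auto simp: T_def)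
    have mTC: "maxdeg TC = maxdeg T"
    proof (rule antisym)
      have "TC \<noteq> {}" using PC by blast
      then obtain P' where "P' \<in> TC" "pdeg P' = maxdeg TC" using maxdeg_in[OF fTC] by blast
      then show "maxdeg TC \<le> maxdeg T" using maxdeg_ge[OF fT, of P'] by (auto simp: T_def)
      show "maxdeg T \<le> maxdeg TC" using maxdeg_ge[OF fTC PC] P by simp
    qed
    have okTI: "okp m (maxdeg T - 1) TI"
      using lt okH T(2) fTI by (auto simp: okp_def)
    have "lowr m (maxdeg T - 1) (par TC) (r1 + card TI)"
      using absorb[OF T(4)[folded T_def], of "par TC" "par TI" TI] par_union[OF fTC fTI TC_TI] dep_par okTI
      by (auto simp: T_def)
    moreover have "card TI \<le> hb" using card_mono[OF fH T(2)] cH by linarith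
    ultimately have "lowr m (maxdeg TC - 1) (par TC) (r1 + hb)"
      using lowr_mono mTC by (metis add_le_mono order_refl)
    then have "corefail m C (r1 + hb)" unfolding corefail_def using T(1) PC by blast
    then show False using nc by blast
  qed
  then obtain P where P: "P \<in> TI" "pdeg P = maxdeg T" by blast
  have PT: "P \<in> T" using P by (simp add: T_def)
  have "P \<in> H" using P T(2) by blast
  then have Pd: "pdeg P \<le> d" using okH by (auto simp: okp_def)
  obtain A' where A': "okp m d A'" "card A' \<le> r1" "\<forall>Q\<in>A'. 0 < pdeg Q \<and> pdeg Q < pdeg P"
    "dep m ((T - {P}) \<union> A') (peval P)"
    using fixlemma[OF T(4)[folded T_def], of P d "par (T - {P})" "T - {P}"] P Pd par_remove[OF fT PT] dep_par
    by auto
  define H' where "H' = ((H - {P}) \<union> A') - C"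
  have fA: "finite A'" using A' by (simp add: okp_def)
  have "okp m d H'" using okH A' by (auto simp: okp_def H'_def)
  moreover have "H' \<inter> C = {}" by (auto simp: H'_def)
  moreover have "prof H' < prof H"
    using prof_decr[OF fH fA _ _, of P H'] P T(2) A'(3) by (auto simp: H'_def)
  moreover have "card H' \<le> card H + r1"
  proof -
    have "card H' \<le> card ((H - {P}) \<union> A')" unfolding H'_def using fH fA by (intro card_mono) auto
    also have "\<dots> \<le> card (H - {P}) + card A'" by (rule card_Un_le)
    finally show ?thesis using A'(2) card_Diff1_le[of H P] by linarith
  qed
  moreover have "\<forall>Q\<in>C \<union> H. dep m (C \<union> H') (peval Q)"
  proof
    fix Q assume Q: "Q \<in> C \<union> H"
    show "dep m (C \<union> H') (peval Q)"
    proof (cases "Q = P")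
      case True
      have "(T - {P}) \<union> A' \<subseteq> C \<union> H'" using T by (auto simp: H'_def T_def)
      then show ?thesis using A'(4) True dep_mono by blast
    next
      case False
      then show ?thesis using Q by (intro dep_mem) (auto simp: H'_def)
    qed
  qed
  ultimately show ?thesis by blast
qed

lemma cross_fix:
  assumes okC: "okp m d C" and okH0: "okp m d H0" and okH: "okp m d H"
    and d0: "H0 \<inter> C = {}" and dH: "H \<inter> C = {}" and cH: "card H \<le> hb"
    and ns: "\<not> sfail m C H0 (r + hb)"
    and T: "TC \<subseteq> C" "U \<subseteq> H0" "U \<noteq> {}" "TJ \<subseteq> H" "TJ \<noteq> {}"
      "lowr m (maxdeg (TC \<union> U \<union> TJ) - 1) (\<lambda>x. par TC x \<noteq> (par U x \<noteq> par TJ x)) r"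
  shows "\<exists>H'. okp m d H' \<and> H' \<inter> (C \<union> U) = {} \<and> prof H' < prof H \<and> card H' \<le> card H + r \<and>
     (\<forall>Q\<in>C \<union> H. dep m (C \<union> U \<union> H') (peval Q))"
proof -
  define T where "T = TC \<union> U \<union> TJ"
  define g where "g = (\<lambda>x. par TC x \<noteq> (par U x \<noteq> par TJ x))"
  have low: "lowr m (maxdeg T - 1) g r" using T(6) by (simp add: T_def g_def)
  have fTC: "finite TC" using finite_okp[OF okC T(1)] .
  have fU: "finite U" using finite_okp[OF okH0 T(2)] .
  have fTJ: "finite TJ" using finite_okp[OF okH T(4)] .
  have fT: "finite T" using fTC fU fTJ by (simp add: T_def)
  have fH: "finite H" using okH by (simp add: okp_def)
  have dCU: "TC \<inter> U = {}" using T d0 by blast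
  have "\<exists>P\<in>TJ. pdeg P = maxdeg T"
  proof (rule ccontr)
    assume no: "\<not> (\<exists>P\<in>TJ. pdeg P = maxdeg T)"
    have lt: "\<forall>Q\<in>TJ. pdeg Q < maxdeg T"
      using no maxdeg_ge[OF fT] by (force simp: T_def)
    obtain P where P: "P \<in> T" "pdeg P = maxdeg T" using maxdeg_in[OF fT] T(3) by (auto simp: T_def)
    have PC: "P \<in> TC \<union> U" using P no by (auto simp: T_def)
    have fCU: "finite (TC \<union> U)" using fTC fU by simp
    have mCU: "maxdeg (TC \<union> U) = maxdeg T"
    proof (rule antisym)
      have "TC \<union> U \<noteq> {}" using PC by blast
      then obtain P' where "P' \<in> TC \<union> U" "pdeg P' = maxdeg (TC \<union> U)" using maxdeg_in[OF fCU] by blast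
      then show "maxdeg (TC \<union> U) \<le> maxdeg T" using maxdeg_ge[OF fT, of P'] by (auto simp: T_def)
      show "maxdeg T \<le> maxdeg (TC \<union> U)" using maxdeg_ge[OF fCU PC] P by simp
    qed
    have okTJ: "okp m (maxdeg T - 1) TJ"
      using lt okH T(4) fTJ by (auto simp: okp_def)
    have "\<And>x. g x = (par (TC \<union> U) x \<noteq> par TJ x)"
      using par_union[OF fTC fU dCU] by (auto simp: g_def)
    then have "lowr m (maxdeg T - 1) (par (TC \<union> U)) (r + card TJ)"
      using absorb[OF low, of "par (TC \<union> U)" "par TJ" TJ] dep_par okTJ by blast
    moreover have "card TJ \<le> hb" using card_mono[OF fH T(4)] cH by linarith
    ultimately have "lowr m (maxdeg (TC \<union> U) - 1) (par (TC \<union> U)) (r + hb)"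
      using lowr_mono mCU by (metis add_le_mono order_refl)
    then have "sfail m C H0 (r + hb)" unfolding sfail_def using T(1,2,3) by blast
    then show False using ns by blast
  qed
  then obtain P where P: "P \<in> TJ" "pdeg P = maxdeg T" by blast
  have "P \<in> H" using P T(4) by blast
  then have Pd: "pdeg P \<le> d" using okH by (auto simp: okp_def)
  define h where "h = (\<lambda>x. par TC x \<noteq> (par U x \<noteq> par (TJ - {P}) x))"
  define B where "B = TC \<union> (U \<union> (TJ - {P}))"
  have dB: "dep m B h" unfolding B_def h_def by (intro dep_xor dep_par)
  have gh: "\<And>x. g x = (peval P x \<noteq> h x)"
    using par_remove[OF fTJ P(1)] by (auto simp: g_def h_def)
  obtain A' where A': "okp m d A'" "card A' \<le> r" "\<forall>Q\<in>A'. 0 < pdeg Q \<and> pdeg Q < pdeg P"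
    "dep m (B \<union> A') (peval P)"
    using fixlemma[OF low, of P d h B] P Pd gh dB by auto
  define H' where "H' = ((H - {P}) \<union> A') - (C \<union> U)"
  have fA: "finite A'" using A' by (simp add: okp_def)
  have "okp m d H'" using okH A' by (auto simp: okp_def H'_def)
  moreover have "H' \<inter> (C \<union> U) = {}" by (auto simp: H'_def)
  moreover have "prof H' < prof H"
    using prof_decr[OF fH fA \<open>P \<in> H\<close>, of H'] A'(3) by (auto simp: H'_def)
  moreover have "card H' \<le> card H + r"
  proof -
    have "card H' \<le> card ((H - {P}) \<union> A')" unfolding H'_def using fH fA by (intro card_mono) auto
    also have "\<dots> \<le> card (H - {P}) + card A'" by (rule card_Un_le)
    finally show ?thesis using A'(2) card_Diff1_le[of H P] by linarith
  qed
  moreover have "\<forall>Q\<in>C \<union> H. dep m (C \<union> U \<union> H') (peval Q)"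
  proof
    fix Q assume Q: "Q \<in> C \<union> H"
    show "dep m (C \<union> U \<union> H') (peval Q)"
    proof (cases "Q = P")
      case True
      have "B \<union> A' \<subseteq> C \<union> U \<union> H'" using T by (auto simp: H'_def B_def)
      then show ?thesis using A'(4) True dep_mono by blast
    next
      case False
      then show ?thesis using Q by (intro dep_mem) (auto simp: H'_def)
    qed
  qed
  ultimately show ?thesis by blast
qed

lemma quarter_root:
  fixes s :: nat and hb :: nat
  assumes "256 * 16 ^ hb \<le> s"
  defines "v \<equiv> real s powr (1/4)"
  shows "v ^ 4 = real s" "4 * 2 ^ hb \<le> v" "sqrt (real s) = v ^ 2"
proof -
  have s0: "0 \<le> real s" by simp
  have "sqrt (sqrt (real s)) = (real s powr (1/2)) powr (1/2)"
    using s0 by (simp add: powr_half_sqrt)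
  also have "\<dots> = real s powr (1/4)" by (simp add: powr_powr)
  finally have v: "v = sqrt (sqrt (real s))" by (simp add: v_def)
  show v2: "sqrt (real s) = v ^ 2" using v by simp
  show v4: "v ^ 4 = real s"
  proof -
    have "real s = (sqrt (real s)) ^ 2" by simp
    also have "\<dots> = (v ^ 2) ^ 2" using v2 by simp
    also have "\<dots> = v ^ 4" by (simp flip: power_mult)
    finally show ?thesis by simp
  qed
  have "((2::real) ^ hb) ^ 4 = 2 ^ (4 * hb)" by (simp add: power_mult[symmetric] mult.commute)
  also have "\<dots> = 16 ^ hb" by (simp add: power_mult)
  finally have "(4 * 2 ^ hb :: real) ^ 4 = 256 * 16 ^ hb"
    by (simp add: power_mult_distrib)
  also have "\<dots> \<le> real s" using assms(1) by (metis of_nat_le_iff of_nat_mult of_nat_numeral of_nat_power)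
  also have "\<dots> = v ^ 4" using v4 by simp
  finally have "(4 * 2 ^ hb :: real) ^ Suc 3 \<le> v ^ Suc 3" by simp
  moreover have "0 \<le> v" by (simp add: v_def)
  ultimately show "4 * 2 ^ hb \<le> v" by (rule power_le_imp_le_base)
qed

lemma arith_a1:
  fixes v b :: real
  assumes "4 \<le> v" "v ^ 4 \<le> 2 * b"
  shows "v \<le> b"
proof -
  have "(4::real) ^ 3 \<le> v ^ 3" using assms(1) by (intro power_mono) auto
  then have "64 * v \<le> v ^ 3 * v" using assms(1) by (intro mult_right_mono) auto
  also have "\<dots> = v ^ 4" by (simp add: eval_nat_numeral)
  finally show ?thesis using assms by linarith
qed

lemma arith_a2:
  fixes v cg cs q :: real
  assumes "4 \<le> v" "(v * v) * (v * v) \<le> 2 * cg" "cg \<le> q * cs" "q \<le> v * v + 1" "0 \<le> cs"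
  shows "v \<le> cs"
proof -
  have vv: "4 * 4 \<le> v * v" using assms(1) by (intro mult_mono) auto
  then have "q \<le> 2 * (v * v)" using assms(4) by linarith
  then have "q * cs \<le> 2 * (v * v) * cs" using assms(5) by (intro mult_right_mono) auto
  moreover have "2 * (2 * (v * v) * cs) = (v * v) * (4 * cs)" by simp
  ultimately have "(v * v) * (v * v) \<le> (v * v) * (4 * cs)" using assms(2,3) by linarith
  moreover have pos: "0 < v * v" using vv by linarith
  ultimately have "v * v \<le> 4 * cs" using mult_le_cancel_left_pos[OF pos, of "v * v" "4 * cs"] by blast
  moreover have "4 * v \<le> v * v" using assms(1) by (intro mult_right_mono) auto
  ultimately show ?thesis by linarith
qed

lemma arith_a3:
  fixes v cn c0 :: real and hb :: nat
  assumes "4 * 2 ^ hb \<le> v" "v ^ 2 \<le> cn" "cn \<le> 2 ^ hb * c0"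
  shows "v \<le> c0"
proof -
  have v0: "0 \<le> v" using assms(1) by (smt (verit) zero_le_power)
  have "4 * 2 ^ hb * v \<le> v * v" using assms(1) v0 by (intro mult_right_mono) auto
  moreover have "v * v = v ^ 2" by (simp add: power2_eq_square)
  moreover have "2 ^ hb * (4 * v) = 4 * 2 ^ hb * v" by simp
  moreover have "2 ^ hb * c0 = c0 * 2 ^ hb" by simp
  ultimately have "2 ^ hb * (4 * v) \<le> 2 ^ hb * c0" using assms(2,3) by linarith
  then have "4 * v \<le> c0" by simp
  then show ?thesis using v0 by linarith
qed

definition valid :: "nat \<Rightarrow> nat \<Rightarrow> poly2 set \<Rightarrow> (nat \<Rightarrow> poly2 set) \<Rightarrow> nat set \<Rightarrow> (nat \<Rightarrow> poly2 set) \<Rightarrow> bool" where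
  "valid m d C H I F \<longleftrightarrow> finite I \<and> okp m d C \<and>
     (\<forall>i\<in>I. okp m d (H i) \<and> H i \<inter> C = {} \<and> (\<forall>P\<in>F i. dep m (C \<union> H i) (peval P)))"

definition outp :: "(nat \<Rightarrow> nat) \<Rightarrow> nat \<Rightarrow> nat \<Rightarrow> nat set \<Rightarrow> (nat \<Rightarrow> poly2 set) \<Rightarrow> real \<Rightarrow> nat \<Rightarrow> bool" where
  "outp f d m I F \<epsilon> K \<longleftrightarrow> (\<exists>J G. J \<subseteq> I \<and> real (card I) powr \<epsilon> \<le> real (card J) \<and>
     (\<forall>i\<in>J. okp m d (G i) \<and> card (G i) \<le> K \<and> (\<forall>P\<in>F i. dep m (G i) (peval P))) \<and>
     (\<forall>i\<in>J. \<forall>j\<in>J. f_regular m f (G i \<union> G j)) \<and>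
     (\<forall>i\<in>J. \<forall>j\<in>J. i \<noteq> j \<longrightarrow> G i \<inter> G j = \<Inter> (G ` J)))"

lemma corefail_mono:
  assumes "corefail m C r" "r \<le> r'" shows "corefail m C r'"
proof -
  obtain T where T: "T \<subseteq> C" "T \<noteq> {}" "lowr m (maxdeg T - 1) (par T) r"
    using assms(1) unfolding corefail_def by blast
  show ?thesis unfolding corefail_def using lowr_mono[OF T(3) assms(2)] T(1,2) by blast
qed
lemma sfail_mono:
  assumes "sfail m C H r" "r \<le> r'" shows "sfail m C H r'"
proof -
  obtain TC TI where T: "TC \<subseteq> C" "TI \<subseteq> H" "TI \<noteq> {}" "lowr m (maxdeg (TC \<union> TI) - 1) (par (TC \<union> TI)) r"
    using assms(1) unfolding sfail_def by blast
  show ?thesis unfolding sfail_def using lowr_mono[OF T(4) assms(2)] T(1-3) by blast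
qed

lemma step:
  assumes mono: "mono f"
    and V: "valid m d C H I F" and HB: "\<forall>i\<in>I. prof (H i) \<le> Mp \<and> card (H i) \<le> hb"
    and big: "256 * 16 ^ hb \<le> card I"
  defines "r \<equiv> f (card C + 2 * hb) + 1"
  shows "(\<exists>C' H'. valid m d C' H' I F \<and> prof C' < prof C \<and> card C' \<le> card C + r + 2 * hb \<and>
            (\<forall>i\<in>I. prof (H' i) \<le> Mp \<and> card (H' i) \<le> hb))
       \<or> (\<exists>I' C' H'. I' \<subseteq> I \<and> real (card I) powr (1/4) \<le> real (card I') \<and> valid m d C' H' I' F \<and>
            card C' \<le> card C + r + 2 * hb \<and> (\<forall>i\<in>I'. prof (H' i) < Mp \<and> card (H' i) \<le> 2 * hb + r))
       \<or> outp f d m I F (1/4) (card C + hb)"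
proof -
  define c where "c = card C"
  have fI: "finite I" and okC: "okp m d C" and okH: "\<forall>i\<in>I. okp m d (H i)"
    and disj: "\<forall>i\<in>I. H i \<inter> C = {}" and depF: "\<forall>i\<in>I. \<forall>P\<in>F i. dep m (C \<union> H i) (peval P)"
    using V by (auto simp: valid_def)
  have fC: "finite C" using okC by (simp add: okp_def)
  define v where "v = real (card I) powr (1/4)"
  have v4: "v ^ 4 = real (card I)" and vhb: "4 * 2 ^ hb \<le> v" and v2: "sqrt (real (card I)) = v ^ 2"
    using quarter_root[OF big] by (auto simp: v_def)
  have "(1::real) \<le> 2 ^ hb" by simp
  then have v4': "4 \<le> v" using vhb by linarith
  have vvvv: "v ^ 4 = (v * v) * (v * v)" by (simp add: eval_nat_numeral)
  show ?thesis
  proof (cases "corefail m C (r + 2 * hb)")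
    case True
    obtain C' where C': "okp m d C'" "prof C' < prof C" "card C' \<le> card C + (r + 2 * hb)"
      "\<forall>Q\<in>C. dep m C' (peval Q)"
      using core_step[OF okC True] by blast
    define H' where "H' = (\<lambda>i. H i - C')"
    have "valid m d C' H' I F"
      unfolding valid_def
    proof (intro conjI ballI)
      show "finite I" by (rule fI)
      show "okp m d C'" by (rule C'(1))
      fix i assume i: "i \<in> I"
      show "okp m d (H' i)" using okp_sub[of m d "H i" "H' i"] okH i by (auto simp: H'_def)
      show "H' i \<inter> C' = {}" by (auto simp: H'_def)
      fix P assume P: "P \<in> F i"
      have "\<forall>Q\<in>C \<union> H i. dep m (C' \<union> H' i) (peval Q)"
      proof
        fix Q assume Q: "Q \<in> C \<union> H i"
        show "dep m (C' \<union> H' i) (peval Q)"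
        proof (cases "Q \<in> C")
          case True
          then show ?thesis using C'(4) dep_mono[of C' "C' \<union> H' i"] by blast
        next
          case False
          then have "Q \<in> C' \<union> H' i" using Q by (auto simp: H'_def)
          then show ?thesis by (rule dep_mem)
        qed
      qed
      then show "dep m (C' \<union> H' i) (peval P)" using depF i P dep_trans by blast
    qed
    moreover have "\<forall>i\<in>I. prof (H' i) \<le> Mp \<and> card (H' i) \<le> hb"
    proof
      fix i assume i: "i \<in> I"
      have fH: "finite (H i)" using okH i by (simp add: okp_def)
      have "prof (H' i) \<le> prof (H i)" using prof_sub[OF fH] by (auto simp: H'_def)
      moreover have "card (H' i) \<le> card (H i)" using fH by (auto simp: H'_def intro: card_mono)
      ultimately show "prof (H' i) \<le> Mp \<and> card (H' i) \<le> hb" using HB i by force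
    qed
    moreover have "card C' \<le> card C + r + 2 * hb" using C'(3) by simp
    ultimately show ?thesis using C'(2) by blast
  next
    case nocore: False
    define Bad where "Bad = {i\<in>I. sfail m C (H i) (r + hb)}"
    have BadI: "Bad \<subseteq> I" by (auto simp: Bad_def)
    have fBad: "finite Bad" using fI BadI finite_subset by blast
    show ?thesis
    proof (cases "card I \<le> 2 * card Bad")
      case True
      have nc2: "\<not> corefail m C (r + hb + hb)" using nocore by (simp add: mult_2 add.assoc)
      have "\<forall>i\<in>Bad. \<exists>H'. okp m d H' \<and> H' \<inter> C = {} \<and> prof H' < prof (H i) \<and> card H' \<le> card (H i) + (r + hb) \<and>
          (\<forall>Q\<in>C \<union> H i. dep m (C \<union> H') (peval Q))"
      proof
        fix i assume i: "i \<in> Bad"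
        then have iI: "i \<in> I" and sf: "sfail m C (H i) (r + hb)" by (auto simp: Bad_def)
        show "\<exists>H'. okp m d H' \<and> H' \<inter> C = {} \<and> prof H' < prof (H i) \<and> card H' \<le> card (H i) + (r + hb) \<and>
          (\<forall>Q\<in>C \<union> H i. dep m (C \<union> H') (peval Q))"
          using single_fix[OF okC _ _ _ nc2 sf] okH disj HB iI by blast
      qed
      then obtain Hf where Hf: "\<forall>i\<in>Bad. okp m d (Hf i) \<and> Hf i \<inter> C = {} \<and> prof (Hf i) < prof (H i) \<and>
          card (Hf i) \<le> card (H i) + (r + hb) \<and> (\<forall>Q\<in>C \<union> H i. dep m (C \<union> Hf i) (peval Q))"
        by (rule bchoice[THEN exE]) blast
      have "valid m d C Hf Bad F"
        unfolding valid_def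
      proof (intro conjI ballI)
        show "finite Bad" by (rule fBad)
        show "okp m d C" by (rule okC)
        fix i assume i: "i \<in> Bad"
        show "okp m d (Hf i)" "Hf i \<inter> C = {}" using Hf i by auto
        fix P assume "P \<in> F i"
        then show "dep m (C \<union> Hf i) (peval P)" using depF Hf i BadI dep_trans by blast
      qed
      moreover have "\<forall>i\<in>Bad. prof (Hf i) < Mp \<and> card (Hf i) \<le> 2 * hb + r"
      proof
        fix i assume i: "i \<in> Bad"
        then have "prof (Hf i) < prof (H i)" "prof (H i) \<le> Mp" "card (Hf i) \<le> card (H i) + (r + hb)" "card (H i) \<le> hb"
          using Hf HB BadI by auto
        then show "prof (Hf i) < Mp \<and> card (Hf i) \<le> 2 * hb + r" by auto
      qed
      moreover have "real (card I) powr (1/4) \<le> real (card Bad)"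
        unfolding v_def[symmetric] using arith_a1[OF v4', of "real (card Bad)"] v4 True by simp
      ultimately have "\<exists>I' C' H'. I' \<subseteq> I \<and> real (card I) powr (1/4) \<le> real (card I') \<and> valid m d C' H' I' F \<and>
            card C' \<le> card C + r + 2 * hb \<and> (\<forall>i\<in>I'. prof (H' i) < Mp \<and> card (H' i) \<le> 2 * hb + r)"
        using BadI by (intro exI[of _ Bad] exI[of _ C] exI[of _ Hf]) auto
      then show ?thesis by blast
    next
      case False
      define Good where "Good = I - Bad"
      have GoodI: "Good \<subseteq> I" by (auto simp: Good_def)
      have fGood: "finite Good" using fI GoodI finite_subset by blast
      have cGood: "card Good = card I - card Bad" unfolding Good_def using card_Diff_subset[OF fBad BadI] .
      have cGood2: "card I \<le> 2 * card Good" using cGood False card_mono[OF fI BadI] by linarith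
      have goodns: "\<forall>i\<in>Good. \<not> sfail m C (H i) (r + hb)" by (auto simp: Good_def Bad_def)
      define E where "E = (\<lambda>i j. i \<noteq> j \<and> xfail m C (H i) (H j) r)"
      have Esym: "\<And>i j. E i j \<Longrightarrow> E j i" unfolding E_def using xfail_sym by blast
      define q where "q = nat \<lceil>sqrt (real (card I))\<rceil>"
      have q1: "real q \<le> v ^ 2 + 1"
      proof -
        have "0 \<le> sqrt (real (card I))" by simp
        then have "0 \<le> \<lceil>sqrt (real (card I))\<rceil>" by (subst zero_le_ceiling) linarith
        then have "real q = of_int \<lceil>sqrt (real (card I))\<rceil>" unfolding q_def by (rule of_nat_nat)
        also have "\<dots> \<le> sqrt (real (card I)) + 1" by (rule of_int_ceiling_le_add_one)
        finally show ?thesis using v2 by simp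
      qed
      have q2: "v ^ 2 \<le> real q" unfolding q_def v2[symmetric] by (rule real_nat_ceiling_ge)
      show ?thesis
      proof (cases "\<forall>w\<in>Good. card {u\<in>Good. E w u} < q")
        case True
        obtain S where S: "S \<subseteq> Good" "\<forall>u\<in>S. \<forall>w\<in>S. u \<noteq> w \<longrightarrow> \<not> E u w" "card Good \<le> q * card S"
          using greedy[OF fGood Esym True] by blast
        define G where "G = (\<lambda>i. C \<union> H i)"
        have SI: "S \<subseteq> I" using S GoodI by blast
        have fr: "f (card C + 2 * hb) \<le> r" by (simp add: r_def)
        have ncr: "\<not> corefail m C r" using nocore corefail_mono[of m C r "r + 2 * hb"] by auto
        have nsr: "\<forall>i\<in>S. \<not> sfail m C (H i) r"
          using goodns S(1) sfail_mono[of m C _ r "r + hb"] by auto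
        have cardv: "v \<le> real (card S)"
        proof (rule arith_a2[OF v4'])
          show "v * v * (v * v) \<le> 2 * real (card Good)" using cGood2 v4 vvvv by simp
          show "real (card Good) \<le> real q * real (card S)" using S(3) by (metis of_nat_le_iff of_nat_mult)
          show "real q \<le> v * v + 1" using q1 by (simp add: power2_eq_square)
        qed simp
        have "outp f d m I F (1/4) (card C + hb)"
          unfolding outp_def
        proof (intro exI[of _ S] exI[of _ G] conjI ballI impI)
          show "S \<subseteq> I" by (rule SI)
          show "real (card I) powr (1 / 4) \<le> real (card S)" using cardv by (simp add: v_def)
          fix i assume i: "i \<in> S"
          then have iI: "i \<in> I" using SI by blast
          show "okp m d (G i)" using okC okH iI okp_Un by (auto simp: G_def)
          show "card (G i) \<le> card C + hb" using card_Un_le[of C "H i"] HB iI by (auto simp: G_def)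
          show "\<And>P. P \<in> F i \<Longrightarrow> dep m (G i) (peval P)" using depF iI by (auto simp: G_def)
        next
          fix i j assume i: "i \<in> S" and j: "j \<in> S"
          then have iI: "i \<in> I" and jI: "j \<in> I" using SI by auto
          have cij: "card (C \<union> H i \<union> H j) \<le> card C + 2 * hb"
          proof -
            have "card (H i) \<le> hb" "card (H j) \<le> hb" using HB iI jI by auto
            then show ?thesis using card_Un_le[of "C \<union> H i" "H j"] card_Un_le[of C "H i"] by linarith
          qed
          have pair: "f_regular m f (C \<union> H i \<union> H j) \<and> H i \<inter> H j = {}" if ij: "i \<noteq> j"
          proof -
            have "\<not> xfail m C (H i) (H j) r" using S(2) i j ij by (auto simp: E_def)
            moreover have "f (card (C \<union> H i \<union> H j)) \<le> r"
              using monoD[OF mono cij] fr by linarith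
            ultimately show ?thesis
              using good_pair[of m d C "H i" "H j" r f] okC okH disj iI jI ncr nsr i j by blast
          qed
          show "f_regular m f (G i \<union> G j)"
          proof (cases "i = j")
            case True
            have "card (C \<union> H i) \<le> card C + 2 * hb" using card_Un_le[of C "H i"] HB iI by auto
            then have "f (card (C \<union> H i)) \<le> r" using monoD[OF mono] fr by (meson order_trans)
            then have "f_regular m f (C \<union> H i)"
              using good_single[of m d C "H i" r f] okC okH disj iI ncr nsr i by blast
            then show ?thesis using True by (simp add: G_def)
          next
            case False
            have "G i \<union> G j = C \<union> H i \<union> H j" by (auto simp: G_def)
            then show ?thesis using pair False by simp
          qed
          assume ij: "i \<noteq> j"
          have gij: "G i \<inter> G j = C" using pair[OF ij] disj iI jI by (auto simp: G_def)
          have "\<Inter> (G ` S) = C"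
          proof
            show "\<Inter> (G ` S) \<subseteq> C" using gij i j by blast
            show "C \<subseteq> \<Inter> (G ` S)" by (auto simp: G_def)
          qed
          then show "G i \<inter> G j = \<Inter> (G ` S)" using gij by simp
        qed
        then show ?thesis by blast
      next
        case False
        then obtain i0 where i0: "i0 \<in> Good" "q \<le> card {u\<in>Good. E i0 u}" by (auto simp: not_less)
        have i0I: "i0 \<in> I" using i0 GoodI by blast
        define N where "N = {u\<in>Good. E i0 u}"
        have fN: "finite N" using fGood by (simp add: N_def)
        have NI: "N \<subseteq> I" using GoodI by (auto simp: N_def)
        have "\<forall>j\<in>N. \<exists>W. fst W \<subseteq> C \<and> fst (snd W) \<subseteq> H i0 \<and> snd (snd W) \<subseteq> H j \<and>
            fst (snd W) \<noteq> {} \<and> snd (snd W) \<noteq> {} \<and>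
            lowr m (maxdeg (fst W \<union> fst (snd W) \<union> snd (snd W)) - 1)
              (\<lambda>x. par (fst W) x \<noteq> (par (fst (snd W)) x \<noteq> par (snd (snd W)) x)) r"
        proof
          fix j assume "j \<in> N"
          then have "xfail m C (H i0) (H j) r" by (auto simp: N_def E_def)
          then obtain TC T1 T2 where "TC \<subseteq> C \<and> T1 \<subseteq> H i0 \<and> T2 \<subseteq> H j \<and> T1 \<noteq> {} \<and> T2 \<noteq> {} \<and>
            lowr m (maxdeg (TC \<union> T1 \<union> T2) - 1) (\<lambda>x. par TC x \<noteq> (par T1 x \<noteq> par T2 x)) r"
            unfolding xfail_def by blast
          then show "\<exists>W. fst W \<subseteq> C \<and> fst (snd W) \<subseteq> H i0 \<and> snd (snd W) \<subseteq> H j \<and>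
            fst (snd W) \<noteq> {} \<and> snd (snd W) \<noteq> {} \<and>
            lowr m (maxdeg (fst W \<union> fst (snd W) \<union> snd (snd W)) - 1)
              (\<lambda>x. par (fst W) x \<noteq> (par (fst (snd W)) x \<noteq> par (snd (snd W)) x)) r"
            by (intro exI[of _ "(TC, T1, T2)"]) simp
        qed
        then obtain W where W: "\<forall>j\<in>N. fst (W j) \<subseteq> C \<and> fst (snd (W j)) \<subseteq> H i0 \<and> snd (snd (W j)) \<subseteq> H j \<and>
            fst (snd (W j)) \<noteq> {} \<and> snd (snd (W j)) \<noteq> {} \<and>
            lowr m (maxdeg (fst (W j) \<union> fst (snd (W j)) \<union> snd (snd (W j))) - 1)
              (\<lambda>x. par (fst (W j)) x \<noteq> (par (fst (snd (W j))) x \<noteq> par (snd (snd (W j))) x)) r"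
          by (rule bchoice[THEN exE]) blast
        define Y where "Y = Pow (H i0)"
        have fH0: "finite (H i0)" using okH i0I by (simp add: okp_def)
        have fY: "finite Y" "Y \<noteq> {}" using fH0 by (auto simp: Y_def)
        have cY: "card Y \<le> 2 ^ hb"
        proof -
          have "card Y = 2 ^ card (H i0)" using fH0 by (simp add: Y_def card_Pow)
          moreover have "card (H i0) \<le> hb" using HB i0I by blast
          ultimately show ?thesis by (simp add: power_increasing)
        qed
        obtain U0 where U0: "U0 \<in> Y" "card N \<le> card Y * card {j\<in>N. fst (snd (W j)) = U0}"
          using pigeon[OF fN fY(1) _ fY(2), of "\<lambda>j. fst (snd (W j))"] W by (auto simp: Y_def)
        define N0 where "N0 = {j\<in>N. fst (snd (W j)) = U0}"
        have N0N: "N0 \<subseteq> N" by (auto simp: N0_def)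
        have fN0: "finite N0" using fN N0N finite_subset by blast
        have "(1::nat) \<le> 16 ^ hb" by simp
        then have "1 \<le> card I" using big by linarith
        then have sq1: "1 \<le> sqrt (real (card I))" by simp
        have "1 \<le> q" using sq1 unfolding q_def by linarith
        then have "1 \<le> card N" using i0 by (simp add: N_def)
        then have "card N0 \<noteq> 0" using U0(2) unfolding N0_def by (metis mult_0_right not_one_le_zero le_trans)
        then have "N0 \<noteq> {}" by (metis card.empty)
        then obtain j0 where j0: "j0 \<in> N0" by blast
        have U0ne: "U0 \<noteq> {}" using W j0 by (auto simp: N0_def)
        have U0H: "U0 \<subseteq> H i0" using U0(1) by (simp add: Y_def)
        have ns0: "\<not> sfail m C (H i0) (r + hb)" using goodns i0 by blast
        have "\<forall>j\<in>N0. \<exists>H'. okp m d H' \<and> H' \<inter> (C \<union> U0) = {} \<and> prof H' < prof (H j) \<and> card H' \<le> card (H j) + r \<and>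
            (\<forall>Q\<in>C \<union> H j. dep m (C \<union> U0 \<union> H') (peval Q))"
        proof
          fix j assume j: "j \<in> N0"
          then have jN: "j \<in> N" and jU: "fst (snd (W j)) = U0" by (auto simp: N0_def)
          have jI: "j \<in> I" using jN NI by blast
          have Wj: "fst (W j) \<subseteq> C" "U0 \<subseteq> H i0" "U0 \<noteq> {}" "snd (snd (W j)) \<subseteq> H j" "snd (snd (W j)) \<noteq> {}"
            "lowr m (maxdeg (fst (W j) \<union> U0 \<union> snd (snd (W j))) - 1)
              (\<lambda>x. par (fst (W j)) x \<noteq> (par U0 x \<noteq> par (snd (snd (W j))) x)) r"
            using W jN jU by auto
          show "\<exists>H'. okp m d H' \<and> H' \<inter> (C \<union> U0) = {} \<and> prof H' < prof (H j) \<and> card H' \<le> card (H j) + r \<and>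
            (\<forall>Q\<in>C \<union> H j. dep m (C \<union> U0 \<union> H') (peval Q))"
            using cross_fix[OF okC _ _ _ _ _ ns0 Wj] okH disj HB i0I jI by blast
        qed
        then obtain Hf where Hf: "\<forall>j\<in>N0. okp m d (Hf j) \<and> Hf j \<inter> (C \<union> U0) = {} \<and> prof (Hf j) < prof (H j) \<and>
            card (Hf j) \<le> card (H j) + r \<and> (\<forall>Q\<in>C \<union> H j. dep m (C \<union> U0 \<union> Hf j) (peval Q))"
          by (rule bchoice[THEN exE]) blast
        have N0I: "N0 \<subseteq> I" using N0N NI by blast
        have "valid m d (C \<union> U0) Hf N0 F"
          unfolding valid_def
        proof (intro conjI ballI)
          show "finite N0" by (rule fN0)
          show "okp m d (C \<union> U0)" using okC okp_sub[of m d "H i0" U0] okH i0I U0H okp_Un by blast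
          fix j assume j: "j \<in> N0"
          show "okp m d (Hf j)" "Hf j \<inter> (C \<union> U0) = {}" using Hf j by auto
          fix P assume "P \<in> F j"
          then show "dep m (C \<union> U0 \<union> Hf j) (peval P)" using depF Hf j N0I dep_trans by blast
        qed
        moreover have "card (C \<union> U0) \<le> card C + r + 2 * hb"
        proof -
          have "card U0 \<le> card (H i0)" using card_mono[OF fH0 U0H] .
          then have "card U0 \<le> hb" using HB i0I by force
          then show ?thesis using card_Un_le[of C U0] by linarith
        qed
        moreover have "\<forall>j\<in>N0. prof (Hf j) < Mp \<and> card (Hf j) \<le> 2 * hb + r"
        proof
          fix j assume j: "j \<in> N0"
          then have "prof (Hf j) < prof (H j)" "prof (H j) \<le> Mp" "card (Hf j) \<le> card (H j) + r" "card (H j) \<le> hb"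
            using Hf HB N0I by auto
          then show "prof (Hf j) < Mp \<and> card (Hf j) \<le> 2 * hb + r" by auto
        qed
        moreover have "real (card I) powr (1/4) \<le> real (card N0)"
          unfolding v_def[symmetric]
        proof (rule arith_a3[OF vhb])
          have "q \<le> card N" using i0(2) by (simp add: N_def)
          then show "v ^ 2 \<le> real (card N)" using q2 of_nat_mono[of q "card N"] by linarith
          have "card N \<le> card Y * card N0" using U0(2) by (simp add: N0_def)
          moreover have "card Y * card N0 \<le> 2 ^ hb * card N0" using cY by (rule mult_le_mono1)
          ultimately have "card N \<le> 2 ^ hb * card N0" by linarith
          then have "real (card N) \<le> real (2 ^ hb * card N0)" by (rule of_nat_mono)
          then show "real (card N) \<le> 2 ^ hb * real (card N0)" by simp
        qed
        ultimately have "\<exists>I' C' H'. I' \<subseteq> I \<and> real (card I) powr (1/4) \<le> real (card I') \<and> valid m d C' H' I' F \<and>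
            card C' \<le> card C + r + 2 * hb \<and> (\<forall>i\<in>I'. prof (H' i) < Mp \<and> card (H' i) \<le> 2 * hb + r)"
          using N0I by (intro exI[of _ N0] exI[of _ "C \<union> U0"] exI[of _ Hf]) auto
        then show ?thesis by blast
      qed
    qed
  qed
qed

lemma outp_mono:
  assumes "outp f d m I F e K" "0 < e'" "e' \<le> e" "K \<le> K'"
  shows "outp f d m I F e' K'"
proof -
  obtain J G where JG: "J \<subseteq> I" "real (card I) powr e \<le> real (card J)"
    "\<forall>i\<in>J. okp m d (G i) \<and> card (G i) \<le> K \<and> (\<forall>P\<in>F i. dep m (G i) (peval P))"
    "\<forall>i\<in>J. \<forall>j\<in>J. f_regular m f (G i \<union> G j)"
    "\<forall>i\<in>J. \<forall>j\<in>J. i \<noteq> j \<longrightarrow> G i \<inter> G j = \<Inter> (G ` J)"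
    using assms(1) unfolding outp_def by (elim exE conjE) (rule that; assumption)
  have "real (card I) powr e' \<le> real (card J)"
  proof (cases "card I = 0")
    case True
    then show ?thesis by simp
  next
    case False
    then have "real (card I) powr e' \<le> real (card I) powr e" using assms(3) by (intro powr_mono) auto
    then show ?thesis using JG(2) by linarith
  qed
  moreover have "\<forall>i\<in>J. okp m d (G i) \<and> card (G i) \<le> K' \<and> (\<forall>P\<in>F i. dep m (G i) (peval P))"
  proof
    fix i assume "i \<in> J"
    then have "okp m d (G i)" "card (G i) \<le> K" "\<forall>P\<in>F i. dep m (G i) (peval P)" using JG(3) by auto
    then show "okp m d (G i) \<and> card (G i) \<le> K' \<and> (\<forall>P\<in>F i. dep m (G i) (peval P))" using assms(4) by simp
  qed
  ultimately show ?thesis unfolding outp_def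
    by (intro exI[of _ J] exI[of _ G] conjI JG(1) JG(4) JG(5)) simp_all
qed

lemma outp_sub:
  assumes "outp f d m I' F e K" "I' \<subseteq> I" "real (card I) powr (1/4) \<le> real (card I')" "0 < e"
  shows "outp f d m I F (e / 4) K"
proof -
  obtain J G where JG: "J \<subseteq> I'" "real (card I') powr e \<le> real (card J)"
    "\<forall>i\<in>J. okp m d (G i) \<and> card (G i) \<le> K \<and> (\<forall>P\<in>F i. dep m (G i) (peval P))"
    "\<forall>i\<in>J. \<forall>j\<in>J. f_regular m f (G i \<union> G j)"
    "\<forall>i\<in>J. \<forall>j\<in>J. i \<noteq> j \<longrightarrow> G i \<inter> G j = \<Inter> (G ` J)"
    using assms(1) unfolding outp_def by (elim exE conjE) (rule that; assumption)
  have "real (card I) powr (e / 4) = (real (card I) powr (1/4)) powr e" by (simp add: powr_powr)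
  also have "\<dots> \<le> real (card I') powr e" using assms(3,4) by (intro powr_mono2) auto
  finally have "real (card I) powr (e / 4) \<le> real (card J)" using JG(2) by linarith
  moreover have "J \<subseteq> I" using JG(1) assms(2) by blast
  ultimately show ?thesis unfolding outp_def
    by (intro exI[of _ J] exI[of _ G] conjI JG(3) JG(4) JG(5)) simp_all
qed

definition Phi :: "(nat \<Rightarrow> nat) \<Rightarrow> nat \<Rightarrow> nat multiset \<Rightarrow> nat multiset \<Rightarrow> nat \<Rightarrow> real \<Rightarrow> nat \<Rightarrow> bool" where
  "Phi f d Mp Mc hb e K \<longleftrightarrow> (\<forall>m C H I F. valid m d C H I F \<and> prof C = Mc \<and>
      (\<forall>i\<in>I. prof (H i) \<le> Mp \<and> card (H i) \<le> hb) \<longrightarrow> outp f d m I F e K)"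

lemma okp_prof: "okp m d A \<Longrightarrow> set_mset (prof A) \<subseteq> {..d} \<and> size (prof A) = card A"
  unfolding okp_def using prof_set[of A] prof_size[of A] by auto

lemma card_UN_bound:
  assumes "finite I" "\<forall>i\<in>I. card (H i) \<le> hb"
  shows "card (\<Union>i\<in>I. H i) \<le> card I * hb"
proof -
  have "card (\<Union>i\<in>I. H i) \<le> (\<Sum>i\<in>I. card (H i))" using card_UN_le[OF assms(1)] .
  also have "\<dots> \<le> card I * hb" using sum_bounded_above[of I "\<lambda>i. card (H i)" hb] assms(2) by simp
  finally show ?thesis .
qed

lemma fallback:
  assumes V: "valid m d C H I F" and HB: "\<forall>i\<in>I. card (H i) \<le> hb" and small: "card I \<le> Nb"
    and R: "\<forall>m G. okp m d G \<and> card G \<le> card C + Nb * hb \<longrightarrow>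
       (\<exists>G'. okp m d G' \<and> card G' \<le> R \<and> f_regular m f G' \<and> (\<forall>Q\<in>G. dep m G' (peval Q)))"
    and e: "0 < e" "e \<le> 1" and KR: "R \<le> K"
  shows "outp f d m I F e K"
proof -
  have fI: "finite I" and okC: "okp m d C" and okH: "\<forall>i\<in>I. okp m d (H i)"
    and depF: "\<forall>i\<in>I. \<forall>P\<in>F i. dep m (C \<union> H i) (peval P)"
    using V by (auto simp: valid_def)
  define U where "U = C \<union> (\<Union>i\<in>I. H i)"
  have okU: "okp m d U" using okC okH fI unfolding U_def okp_def by auto
  have "card U \<le> card C + card (\<Union>i\<in>I. H i)" unfolding U_def by (rule card_Un_le)
  also have "\<dots> \<le> card C + card I * hb" using card_UN_bound[OF fI HB] by simp
  also have "\<dots> \<le> card C + Nb * hb" using small by (simp add: mult_le_mono1)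
  finally obtain G0 where G0: "okp m d G0" "card G0 \<le> R" "f_regular m f G0" "\<forall>Q\<in>U. dep m G0 (peval Q)"
    using R okU by blast
  define G where "G = (\<lambda>i::nat. G0)"
  have "real (card I) powr e \<le> real (card I)"
  proof (cases "card I = 0")
    case True then show ?thesis by simp
  next
    case False
    then have "real (card I) powr e \<le> real (card I) powr 1" using e by (intro powr_mono) auto
    then show ?thesis using False by simp
  qed
  moreover have "\<forall>i\<in>I. okp m d (G i) \<and> card (G i) \<le> K \<and> (\<forall>P\<in>F i. dep m (G i) (peval P))"
  proof
    fix i assume i: "i \<in> I"
    have "\<forall>Q\<in>C \<union> H i. dep m G0 (peval Q)" using G0(4) i by (auto simp: U_def)
    then have "\<forall>P\<in>F i. dep m G0 (peval P)" using depF i dep_trans by blast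
    then show "okp m d (G i) \<and> card (G i) \<le> K \<and> (\<forall>P\<in>F i. dep m (G i) (peval P))"
      using G0 KR by (auto simp: G_def)
  qed
  moreover have "\<forall>i\<in>I. \<forall>j\<in>I. f_regular m f (G i \<union> G j)" using G0(3) by (simp add: G_def)
  moreover have "\<forall>i\<in>I. \<forall>j\<in>I. i \<noteq> j \<longrightarrow> G i \<inter> G j = \<Inter> (G ` I)" by (auto simp: G_def)
  ultimately show ?thesis unfolding outp_def by blast
qed

lemma main:
  assumes mono: "mono f"
  shows "\<forall>hb. \<exists>e>0. \<exists>K. Phi f d Mp Mc hb e K"
proof (induction Mp arbitrary: Mc rule: less_induct)
  case (less Mp)
  have outer: "\<And>Mp' Mc' hb'. Mp' < Mp \<Longrightarrow> \<exists>e>0. \<exists>K. Phi f d Mp' Mc' hb' e K"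
    using less by blast
  show ?case
  proof (induction Mc rule: less_induct)
    case (less Mc)
    have inner: "\<And>Mc' hb'. Mc' < Mc \<Longrightarrow> \<exists>e>0. \<exists>K. Phi f d Mp Mc' hb' e K"
      using less by blast
    show ?case
    proof
      fix hb
      define c where "c = size Mc"
      define r where "r = f (c + 2 * hb) + 1"
      define hb' where "hb' = 2 * hb + r"
      define cb' where "cb' = c + r + 2 * hb"
      define S1 where "S1 = {M'. M' < Mc \<and> set_mset M' \<subseteq> {..d} \<and> size M' \<le> cb'}"
      define S2 where "S2 = {M1. M1 < Mp \<and> set_mset M1 \<subseteq> {..d} \<and> size M1 \<le> hb'} \<times>
                             {M2. set_mset M2 \<subseteq> {..d} \<and> size M2 \<le> cb'}"
      have fS1: "finite S1"
        by (rule finite_subset[OF _ finite_msets[of d cb']]) (auto simp: S1_def)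
      have fS2: "finite S2" unfolding S2_def
        by (intro finite_cartesian_product finite_subset[OF _ finite_msets[of d hb']] finite_subset[OF _ finite_msets[of d cb']]) auto
      have "\<forall>M'\<in>S1. \<exists>p. 0 < fst p \<and> Phi f d Mp M' hb' (fst p) (snd p)"
      proof
        fix M' assume "M' \<in> S1"
        then have "M' < Mc" by (simp add: S1_def)
        then obtain e K where "0 < e" "Phi f d Mp M' hb' e K" using inner by blast
        then show "\<exists>p. 0 < fst p \<and> Phi f d Mp M' hb' (fst p) (snd p)" by (intro exI[of _ "(e, K)"]) simp
      qed
      then obtain P1 where P1: "\<forall>M'\<in>S1. 0 < fst (P1 M') \<and> Phi f d Mp M' hb' (fst (P1 M')) (snd (P1 M'))"
        by (rule bchoice[THEN exE]) blast
      have "\<forall>q\<in>S2. \<exists>p. 0 < fst p \<and> Phi f d (fst q) (snd q) hb' (fst p) (snd p)"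
      proof
        fix q assume "q \<in> S2"
        then have "fst q < Mp" by (auto simp: S2_def)
        then obtain e K where "0 < e" "Phi f d (fst q) (snd q) hb' e K" using outer by blast
        then show "\<exists>p. 0 < fst p \<and> Phi f d (fst q) (snd q) hb' (fst p) (snd p)" by (intro exI[of _ "(e, K)"]) simp
      qed
      then obtain P2 where P2: "\<forall>q\<in>S2. 0 < fst (P2 q) \<and> Phi f d (fst q) (snd q) hb' (fst (P2 q)) (snd (P2 q))"
        by (rule bchoice[THEN exE]) blast
      define N0 :: nat where "N0 = 256 * 16 ^ hb"
      obtain R where R: "\<forall>m G. okp m d G \<and> card G \<le> c + N0 * hb \<longrightarrow>
         (\<exists>G'. okp m d G' \<and> card G' \<le> R \<and> f_regular m f G' \<and> (\<forall>Q\<in>G. dep m G' (peval Q)))"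
        using REG by blast
      define ES where "ES = insert 1 ((fst \<circ> P1) ` S1 \<union> (fst \<circ> P2) ` S2)"
      define e0 where "e0 = Min ES"
      define K0 where "K0 = Max (insert (c + hb + R) ((snd \<circ> P1) ` S1 \<union> (snd \<circ> P2) ` S2))"
      have fES: "finite ES" using fS1 fS2 by (simp add: ES_def)
      have e0pos: "0 < e0"
      proof -
        have "e0 \<in> ES" unfolding e0_def using fES by (intro Min_in) (auto simp: ES_def)
        then show ?thesis using P1 P2 by (auto simp: ES_def)
      qed
      have e01: "e0 \<le> 1" unfolding e0_def using fES by (intro Min_le) (auto simp: ES_def)
      have e0S1: "\<And>M'. M' \<in> S1 \<Longrightarrow> e0 \<le> fst (P1 M')" unfolding e0_def using fES by (intro Min_le) (auto simp: ES_def)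
      have e0S2: "\<And>q. q \<in> S2 \<Longrightarrow> e0 \<le> fst (P2 q)" unfolding e0_def using fES by (intro Min_le) (auto simp: ES_def)
      have fKS: "finite (insert (c + hb + R) ((snd \<circ> P1) ` S1 \<union> (snd \<circ> P2) ` S2))" using fS1 fS2 by simp
      have K0R: "c + hb + R \<le> K0" unfolding K0_def using fKS by (intro Max_ge) auto
      have K0S1: "\<And>M'. M' \<in> S1 \<Longrightarrow> snd (P1 M') \<le> K0" unfolding K0_def using fKS by (intro Max_ge) auto
      have K0S2: "\<And>q. q \<in> S2 \<Longrightarrow> snd (P2 q) \<le> K0" unfolding K0_def using fKS by (intro Max_ge) auto
      show "\<exists>e>0. \<exists>K. Phi f d Mp Mc hb e K"
      proof (intro exI[of _ "e0 / 4"] conjI exI[of _ K0])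
        show "0 < e0 / 4" using e0pos by simp
        show "Phi f d Mp Mc hb (e0 / 4) K0"
          unfolding Phi_def
        proof (intro allI impI)
          fix m C H I F
          assume st: "valid m d C H I F \<and> prof C = Mc \<and> (\<forall>i\<in>I. prof (H i) \<le> Mp \<and> card (H i) \<le> hb)"
          then have V: "valid m d C H I F" and pC: "prof C = Mc" and HB: "\<forall>i\<in>I. prof (H i) \<le> Mp \<and> card (H i) \<le> hb"
            by auto
          have okC: "okp m d C" using V by (simp add: valid_def)
          have cC: "card C = c" using okp_prof[OF okC] pC by (simp add: c_def)
          show "outp f d m I F (e0 / 4) K0"
          proof (cases "card I < N0")
            case True
            show ?thesis
            proof (rule fallback[where Nb=N0 and R=R and e="e0/4" and K=K0 and hb=hb, OF V])
              show "\<forall>i\<in>I. card (H i) \<le> hb" using HB by blast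
              show "card I \<le> N0" using True by simp
              show "\<forall>m G. okp m d G \<and> card G \<le> card C + N0 * hb \<longrightarrow>
                 (\<exists>G'. okp m d G' \<and> card G' \<le> R \<and> f_regular m f G' \<and> (\<forall>Q\<in>G. dep m G' (peval Q)))"
                using R cC by simp
              show "0 < e0 / 4" "e0 / 4 \<le> 1" using e0pos e01 by auto
              show "R \<le> K0" using K0R by simp
            qed
          next
            case False
            then have big: "256 * 16 ^ hb \<le> card I" by (simp add: N0_def)
            have rr: "f (card C + 2 * hb) + 1 = r" by (simp add: r_def cC)
            note stp = step[OF mono V HB big, unfolded rr]
            show ?thesis
            proof (rule disjE[OF stp])
              assume "\<exists>C' H'. valid m d C' H' I F \<and> prof C' < prof C \<and> card C' \<le> card C + r + 2 * hb \<and>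
                (\<forall>i\<in>I. prof (H' i) \<le> Mp \<and> card (H' i) \<le> hb)"
              then obtain C' H' where A: "valid m d C' H' I F" "prof C' < prof C" "card C' \<le> card C + r + 2 * hb"
                "\<forall>i\<in>I. prof (H' i) \<le> Mp \<and> card (H' i) \<le> hb" by blast
              have okC': "okp m d C'" using A(1) by (simp add: valid_def)
              have inS: "prof C' \<in> S1" using A(2,3) pC cC okp_prof[OF okC'] by (auto simp: S1_def cb'_def)
              have "\<forall>i\<in>I. prof (H' i) \<le> Mp \<and> card (H' i) \<le> hb'" using A(4) by (auto simp: hb'_def)
              moreover have ph: "Phi f d Mp (prof C') hb' (fst (P1 (prof C'))) (snd (P1 (prof C')))"
                using P1 inS by blast
              have "valid m d C' H' I F \<and> prof C' = prof C' \<and> (\<forall>i\<in>I. prof (H' i) \<le> Mp \<and> card (H' i) \<le> hb') \<longrightarrow>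
                outp f d m I F (fst (P1 (prof C'))) (snd (P1 (prof C')))"
                using ph unfolding Phi_def by blast
              ultimately have "outp f d m I F (fst (P1 (prof C'))) (snd (P1 (prof C')))"
                using A(1) by blast
              then show ?thesis
                by (rule outp_mono) (use e0S1[OF inS] K0S1[OF inS] e0pos in auto)
            next
              assume "(\<exists>I' C' H'. I' \<subseteq> I \<and> real (card I) powr (1/4) \<le> real (card I') \<and> valid m d C' H' I' F \<and>
                card C' \<le> card C + r + 2 * hb \<and> (\<forall>i\<in>I'. prof (H' i) < Mp \<and> card (H' i) \<le> 2 * hb + r))
                \<or> outp f d m I F (1/4) (card C + hb)"
              then show ?thesis
              proof
                assume "\<exists>I' C' H'. I' \<subseteq> I \<and> real (card I) powr (1/4) \<le> real (card I') \<and> valid m d C' H' I' F \<and>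
                  card C' \<le> card C + r + 2 * hb \<and> (\<forall>i\<in>I'. prof (H' i) < Mp \<and> card (H' i) \<le> 2 * hb + r)"
                then obtain I' C' H' where B: "I' \<subseteq> I" "real (card I) powr (1/4) \<le> real (card I')"
                  "valid m d C' H' I' F" "card C' \<le> card C + r + 2 * hb"
                  "\<forall>i\<in>I'. prof (H' i) < Mp \<and> card (H' i) \<le> 2 * hb + r" by blast
                have fI': "finite I'" using B(3) by (simp add: valid_def)
                have "0 < card I" using big by (metis le_zero_eq mult_is_0 not_gr0 power_not_zero zero_neq_numeral)
                then have "0 < real (card I) powr (1/4)" by simp
                then have "I' \<noteq> {}" using B(2) by auto
                define Mp' where "Mp' = Max ((\<lambda>i. prof (H' i)) ` I')"
                have "Mp' \<in> (\<lambda>i. prof (H' i)) ` I'" unfolding Mp'_def using fI' \<open>I' \<noteq> {}\<close> by (intro Max_in) auto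
                then obtain i1 where i1: "i1 \<in> I'" "Mp' = prof (H' i1)" by blast
                have Mple: "\<forall>i\<in>I'. prof (H' i) \<le> Mp'" unfolding Mp'_def using fI' by auto
                have okH1: "okp m d (H' i1)" using B(3) i1 by (simp add: valid_def)
                have okC': "okp m d C'" using B(3) by (simp add: valid_def)
                have inS: "(Mp', prof C') \<in> S2"
                  using i1 B(4,5) okp_prof[OF okH1] okp_prof[OF okC'] cC by (auto simp: S2_def hb'_def cb'_def)
                have "\<forall>i\<in>I'. prof (H' i) \<le> Mp' \<and> card (H' i) \<le> hb'" using Mple B(5) by (auto simp: hb'_def)
                moreover have ph: "Phi f d Mp' (prof C') hb' (fst (P2 (Mp', prof C'))) (snd (P2 (Mp', prof C')))"
                  using P2 inS by fastforce
                have "valid m d C' H' I' F \<and> prof C' = prof C' \<and> (\<forall>i\<in>I'. prof (H' i) \<le> Mp' \<and> card (H' i) \<le> hb') \<longrightarrow>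
                  outp f d m I' F (fst (P2 (Mp', prof C'))) (snd (P2 (Mp', prof C')))"
                  using ph unfolding Phi_def by blast
                ultimately have "outp f d m I' F (fst (P2 (Mp', prof C'))) (snd (P2 (Mp', prof C')))"
                  using B(3) by blast
                then have "outp f d m I F (fst (P2 (Mp', prof C')) / 4) (snd (P2 (Mp', prof C')))"
                  by (rule outp_sub) (use B(1,2) P2 inS in auto)
                then show ?thesis
                  by (rule outp_mono) (use e0S2[OF inS] K0S2[OF inS] e0pos in auto)
              next
                assume "outp f d m I F (1/4) (card C + hb)"
                then show ?thesis by (rule outp_mono) (use e01 e0pos K0R cC in auto)
              qed
            qed
          qed
        qed
      qed
    qed
  qed
qed

lemma mset_le_rep: "(\<forall>x\<in>#M. x \<le> (d::nat)) \<Longrightarrow> M \<le> replicate_mset (size M) d"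
proof (induction M)
  case empty
  then show ?case by simp
next
  case (add x M)
  then have "M \<le> replicate_mset (size M) d" "{#x#} \<le> {#d#}" by auto
  then have "M + {#x#} \<le> replicate_mset (size M) d + {#d#}" by (rule add_mono)
  then show ?case by simp
qed

lemma rep_plus: "replicate_mset (a + b) x = replicate_mset a x + replicate_mset b x"
  by (induction a) auto

lemma prof_le_rep:
  assumes "okp m d A" "card A \<le> K"
  shows "prof A \<le> replicate_mset K d"
proof -
  have pa: "set_mset (prof A) \<subseteq> {..d} \<and> size (prof A) = card A" using okp_prof[OF assms(1)] .
  then have "prof A \<le> replicate_mset (size (prof A)) d" by (intro mset_le_rep) auto
  also have "replicate_mset (size (prof A)) d \<le> replicate_mset K d"
  proof -
    have "replicate_mset K d = replicate_mset (size (prof A)) d + replicate_mset (K - size (prof A)) d"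
      using pa assms(2) by (simp add: rep_plus[symmetric])
    then show ?thesis by (metis mset_subset_eq_add_left subset_eq_imp_le_multiset)
  qed
  finally show ?thesis .
qed

lemma refines_of_dep:
  assumes "\<forall>P\<in>F. dep m G (peval P)"
  shows "refines m G F"
proof -
  define \<Gamma> where "\<Gamma> = (\<lambda>(v :: poly2 \<Rightarrow> bool) (P :: poly2).
     peval P (SOME x. x \<subseteq> {..<m} \<and> (\<forall>Q\<in>G. peval Q x = v Q)))"
  have "\<forall>x. x \<subseteq> {..<m} \<longrightarrow>
        (\<forall>P\<in>F. peval P x = \<Gamma> (\<lambda>Q. if Q \<in> G then peval Q x else False) P)"
  proof (intro allI impI ballI)
    fix x P assume x: "x \<subseteq> {..<m}" and P: "P \<in> F"
    define v where "v = (\<lambda>Q. if Q \<in> G then peval Q x else False)"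
    have ex: "\<exists>y. y \<subseteq> {..<m} \<and> (\<forall>Q\<in>G. peval Q y = v Q)" using x by (intro exI[of _ x]) (simp add: v_def)
    define y where "y = (SOME y. y \<subseteq> {..<m} \<and> (\<forall>Q\<in>G. peval Q y = v Q))"
    have y: "y \<subseteq> {..<m} \<and> (\<forall>Q\<in>G. peval Q y = v Q)" unfolding y_def using someI_ex[OF ex] .
    have "agree G x y" unfolding agree_def using y by (simp add: v_def)
    then have "peval P x = peval P y" using assms P x y unfolding dep_def by blast
    then show "peval P x = \<Gamma> (\<lambda>Q. if Q \<in> G then peval Q x else False) P"
      by (simp add: \<Gamma>_def y_def v_def)
  qed
  then show ?thesis unfolding refines_def by blast
qed

theorem theorem5p2:
  fixes f :: "nat \<Rightarrow> nat" and K d :: nat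
  assumes "growth_function f" and "K > 0" and "d > 0"
  shows "\<exists>\<epsilon>::real. \<epsilon> > 0 \<and> (\<exists>K'::nat.
    \<forall>(m::nat) (n::nat) (F :: nat \<Rightarrow> poly2 set).
      (\<forall>i<n. is_factor m d (F i) \<and> card (F i) \<le> K) \<longrightarrow>
      (\<exists>(w::nat) (\<pi>::nat \<Rightarrow> nat) (G :: nat \<Rightarrow> poly2 set).
         inj_on \<pi> {..<w} \<and> \<pi> ` {..<w} \<subseteq> {..<n} \<and>
         real w \<ge> real n powr \<epsilon> \<and>
         (\<forall>i<w. is_factor m d (G i) \<and> refines m (G i) (F (\<pi> i)) \<and> card (G i) \<le> K') \<and>
         (\<forall>i<w. \<forall>j<w. f_regular m f (G i \<union> G j)) \<and>
         sunflower w G))"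
proof -
  have mono: "mono f" using assms(1) by (simp add: growth_function_def)
  obtain e K' where e: "0 < e" and ph: "Phi f d (replicate_mset K d) {#} K e K'"
    using main[OF mono, of d "replicate_mset K d" "{#}"] by blast
  show ?thesis
  proof (rule exI[of _ e], rule conjI[OF e], rule exI[of _ K'], intro allI impI)
    fix m n and F :: "nat \<Rightarrow> poly2 set"
    assume hF: "\<forall>i<n. is_factor m d (F i) \<and> card (F i) \<le> K"
    have okF: "\<forall>i\<in>{..<n}. okp m d (F i)" using hF by (auto simp: is_factor_def okp_def)
    have V: "valid m d {} F {..<n} F"
      unfolding valid_def
    proof (intro conjI ballI)
      show "finite {..<n}" by simp
      show "okp m d {}" by (simp add: okp_def)
      fix i assume i: "i \<in> {..<n}"
      show "okp m d (F i)" using okF i by blast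
      show "F i \<inter> {} = {}" by simp
      fix P assume "P \<in> F i"
      then show "dep m ({} \<union> F i) (peval P)" by (simp add: dep_mem)
    qed
    have HB: "\<forall>i\<in>{..<n}. prof (F i) \<le> replicate_mset K d \<and> card (F i) \<le> K"
    proof
      fix i assume i: "i \<in> {..<n}"
      then have "okp m d (F i)" "card (F i) \<le> K" using hF okF by auto
      then show "prof (F i) \<le> replicate_mset K d \<and> card (F i) \<le> K" using prof_le_rep by blast
    qed
    have "prof {} = {#}" by (simp add: prof_def)
    moreover have "valid m d {} F {..<n} F \<and> prof {} = {#} \<and>
        (\<forall>i\<in>{..<n}. prof (F i) \<le> replicate_mset K d \<and> card (F i) \<le> K) \<longrightarrow> outp f d m {..<n} F e K'"
      using ph unfolding Phi_def by blast
    ultimately have "outp f d m {..<n} F e K'" using V HB by blast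
    then obtain J G where JG: "J \<subseteq> {..<n}" "real (card {..<n}) powr e \<le> real (card J)"
      "\<forall>i\<in>J. okp m d (G i) \<and> card (G i) \<le> K' \<and> (\<forall>P\<in>F i. dep m (G i) (peval P))"
      "\<forall>i\<in>J. \<forall>j\<in>J. f_regular m f (G i \<union> G j)"
      "\<forall>i\<in>J. \<forall>j\<in>J. i \<noteq> j \<longrightarrow> G i \<inter> G j = \<Inter> (G ` J)"
      unfolding outp_def by (elim exE conjE) (rule that; assumption)
    have fJ: "finite J" using JG(1) finite_subset by blast
    obtain \<pi> where pi: "bij_betw \<pi> {0..<card J} J" using ex_bij_betw_nat_finite[OF fJ] by blast
    define w where "w = card J"
    have pi': "bij_betw \<pi> {..<w} J" using pi by (simp add: w_def atLeast0LessThan)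
    have inj: "inj_on \<pi> {..<w}" and img: "\<pi> ` {..<w} = J" using pi' by (auto simp: bij_betw_def)
    have piJ: "\<And>i. i < w \<Longrightarrow> \<pi> i \<in> J" using img by blast
    show "\<exists>w \<pi> G. inj_on \<pi> {..<w} \<and> \<pi> ` {..<w} \<subseteq> {..<n} \<and> real n powr e \<le> real w \<and>
         (\<forall>i<w. is_factor m d (G i) \<and> refines m (G i) (F (\<pi> i)) \<and> card (G i) \<le> K') \<and>
         (\<forall>i<w. \<forall>j<w. f_regular m f (G i \<union> G j)) \<and> sunflower w G"
    proof (intro exI[of _ w] exI[of _ \<pi>] exI[of _ "\<lambda>k. G (\<pi> k)"] conjI allI impI)
      show "inj_on \<pi> {..<w}" by (rule inj)
      show "\<pi> ` {..<w} \<subseteq> {..<n}" using img JG(1) by simp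
      show "real n powr e \<le> real w" using JG(2) by (simp add: w_def)
      fix i assume i: "i < w"
      then have pJ: "\<pi> i \<in> J" by (rule piJ)
      show "is_factor m d (G (\<pi> i))" using JG(3) pJ by (auto simp: is_factor_def okp_def)
      show "refines m (G (\<pi> i)) (F (\<pi> i))" using JG(3) pJ by (intro refines_of_dep) auto
      show "card (G (\<pi> i)) \<le> K'" using JG(3) pJ by auto
      fix j assume j: "j < w"
      show "f_regular m f (G (\<pi> i) \<union> G (\<pi> j))" using JG(4) pJ piJ[OF j] by auto
    next
      show "sunflower w (\<lambda>k. G (\<pi> k))"
        unfolding sunflower_def
      proof (intro allI impI)
        fix i j assume ij: "i < w" "j < w" "i \<noteq> j"
        then have "\<pi> i \<noteq> \<pi> j" using inj by (auto dest: inj_onD)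
        moreover have "\<pi> i \<in> J" "\<pi> j \<in> J" using piJ ij by auto
        ultimately have "G (\<pi> i) \<inter> G (\<pi> j) = \<Inter> (G ` J)" using JG(5) by blast
        moreover have "(\<Inter>k\<in>{..<w}. G (\<pi> k)) = \<Inter> (G ` J)"
          unfolding img[symmetric] by (simp add: image_comp)
        ultimately show "G (\<pi> i) \<inter> G (\<pi> j) = (\<Inter>k\<in>{..<w}. G (\<pi> k))" by simp
      qed
    qed
  qed
qed

end
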